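(* Let $\Sigma$ be a finite group, $A$ a pseudofield, and $\overline A=\operatorname{Fun}L$ with $A\subseteq\overline A$ via the Taylor homomorphism, where $L$ is an algebraic closure of $A/\mathfrak m$ for a maximal ideal $\mathfrak m$ of $A$. If $B$ is a difference closed pseudofield containing $A$ (i.e. with an injective difference homomorphism $A\to B$), then there exists a difference embedding $\overline A\to B$ whose restriction to $A$ is the given embedding $A\to B$.
   Context: A difference ring is a commutative ring with identity with an action of the group $\Sigma$ by ring automorphisms; a difference homomorphism is a unital ring homomorphism commuting with the actions. A pseudofield is an absolutely flat difference ring with no $\Sigma$-stable ideals other than $0$ and itself. $\operatorname{Fun}L$ is the ring of functions $\Sigma\to L$ with pointwise operations and $(\sigma f)(\tau)=f(\sigma^{-1}\tau)$. The Taylor homomorphism of a ring homomorphism $\varphi\colon A\to L$ (here $A\to A/\mathfrak m\to L$) is the difference homomorphism $\Phi\colon A\to\operatorname{Fun}L$, $\Phi(a)(\tau)=\varphi(\tau^{-1}a)$; it is injective here. A pseudofield $A$ is difference closed if for every $n$ and every $\Sigma$-stable ideal $\mathfrak a$ of the difference polynomial ring $A\{y_1,\dots,y_n\}$ (polynomial ring in indeterminates $\sigma y_i$, $\tau(\sigma y_i)=(\tau\sigma)y_i$) the radical of $\mathfrak a$ equals the set of difference polynomials vanishing at every common zero of $\mathfrak a$ in $A^n$ (evaluation via $\sigma y_i\mapsto\sigma(a_i)$). *)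

theory Defs
  imports "HOL-Library.Function_Algebras" "HOL-Library.Poly_Mapping"
          "HOL-Computational_Algebra.Polynomial"
begin

text \<open>The finite group Sigma is a type of class group_add (written additively,
  NOT assumed commutative) and finite.  Actions are maps act :: 's => 'a => 'a.\<close>

definition is_ideal :: "'a::comm_ring_1 set \<Rightarrow> bool" where
  "is_ideal I \<longleftrightarrow> 0 \<in> I \<and> (\<forall>x\<in>I. \<forall>y\<in>I. x + y \<in> I) \<and> (\<forall>r. \<forall>x\<in>I. r * x \<in> I)"

definition maximal_ideal :: "'a::comm_ring_1 set \<Rightarrow> bool" where
  "maximal_ideal M \<longleftrightarrow> is_ideal M \<and> M \<noteq> UNIV \<and>
     (\<forall>J. is_ideal J \<and> M \<subseteq> J \<longrightarrow> J = M \<or> J = UNIV)"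

definition ring_hom :: "('a::comm_ring_1 \<Rightarrow> 'b::comm_ring_1) \<Rightarrow> bool" where
  "ring_hom f \<longleftrightarrow> f 1 = 1 \<and> (\<forall>x y. f (x + y) = f x + f y) \<and> (\<forall>x y. f (x * y) = f x * f y)"

definition difference_ring :: "('s::group_add \<Rightarrow> 'a::comm_ring_1 \<Rightarrow> 'a) \<Rightarrow> bool" where
  "difference_ring act \<longleftrightarrow> act 0 = id \<and> (\<forall>\<sigma> \<tau>. act (\<sigma> + \<tau>) = act \<sigma> \<circ> act \<tau>) \<and>
     (\<forall>\<sigma>. ring_hom (act \<sigma>) \<and> bij (act \<sigma>))"

definition difference_hom ::
  "('s::group_add \<Rightarrow> 'a::comm_ring_1 \<Rightarrow> 'a) \<Rightarrow> ('s \<Rightarrow> 'b::comm_ring_1 \<Rightarrow> 'b) \<Rightarrow> ('a \<Rightarrow> 'b) \<Rightarrow> bool" where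
  "difference_hom actA actB f \<longleftrightarrow> ring_hom f \<and> (\<forall>\<sigma> a. f (actA \<sigma> a) = actB \<sigma> (f a))"

definition stable :: "('s \<Rightarrow> 'a \<Rightarrow> 'a) \<Rightarrow> 'a set \<Rightarrow> bool" where
  "stable act I \<longleftrightarrow> (\<forall>\<sigma>. \<forall>x\<in>I. act \<sigma> x \<in> I)"

definition absolutely_flat :: "'a::comm_ring_1 itself \<Rightarrow> bool" where
  "absolutely_flat _ \<longleftrightarrow> (\<forall>a::'a. \<exists>x. a = a * a * x)"

definition pseudofield :: "('s::group_add \<Rightarrow> 'a::comm_ring_1 \<Rightarrow> 'a) \<Rightarrow> bool" where
  "pseudofield act \<longleftrightarrow> difference_ring act \<and> (0::'a) \<noteq> 1 \<and> absolutely_flat TYPE('a) \<and>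
     (\<forall>I. is_ideal I \<and> stable act I \<longrightarrow> I = {0} \<or> I = UNIV)"

text \<open>Fun L = functions Sigma => L (pointwise ring operations from Function_Algebras),
  with (sigma f)(tau) = f(sigma^-1 tau).\<close>
definition fun_act :: "'s::group_add \<Rightarrow> ('s \<Rightarrow> 'l) \<Rightarrow> ('s \<Rightarrow> 'l)" where
  "fun_act \<sigma> f = (\<lambda>\<tau>. f (- \<sigma> + \<tau>))"

definition taylor :: "('s::group_add \<Rightarrow> 'a \<Rightarrow> 'a) \<Rightarrow> ('a \<Rightarrow> 'l) \<Rightarrow> 'a \<Rightarrow> ('s \<Rightarrow> 'l)" where
  "taylor act \<phi> a = (\<lambda>\<tau>. \<phi> (act (- \<tau>) a))"

text \<open>Difference polynomials: polynomial ring in indeterminates (sigma, i) = sigma y_i.\<close>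
type_synonym ('s, 'a) dpoly = "(('s \<times> nat) \<Rightarrow>\<^sub>0 nat) \<Rightarrow>\<^sub>0 'a"

text \<open>Renaming of monomials: (sigma, i) |-> (tau sigma, i).\<close>
definition mon_shift :: "'s::group_add \<Rightarrow> (('s \<times> nat) \<Rightarrow>\<^sub>0 nat) \<Rightarrow> (('s \<times> nat) \<Rightarrow>\<^sub>0 nat)" where
  "mon_shift \<tau> m = Poly_Mapping.map_key (\<lambda>(\<rho>, i). (- \<tau> + \<rho>, i)) m"

text \<open>Action on difference polynomials: on coefficients via act, on indeterminates by
  tau(sigma y_i) = (tau sigma) y_i.\<close>
definition dpoly_act :: "('s::group_add \<Rightarrow> 'a::comm_ring_1 \<Rightarrow> 'a) \<Rightarrow> 's \<Rightarrow> ('s, 'a) dpoly \<Rightarrow> ('s, 'a) dpoly" where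
  "dpoly_act act \<tau> p = Poly_Mapping.map (act \<tau>) (Poly_Mapping.map_key (mon_shift (- \<tau>)) p)"

definition dpoly_eval :: "('s \<Rightarrow> 'a::comm_ring_1 \<Rightarrow> 'a) \<Rightarrow> (nat \<Rightarrow> 'a) \<Rightarrow> ('s, 'a) dpoly \<Rightarrow> 'a" where
  "dpoly_eval act x p = (\<Sum>m\<in>Poly_Mapping.keys p. Poly_Mapping.lookup p m *
      (\<Prod>v\<in>Poly_Mapping.keys m. act (fst v) (x (snd v)) ^ Poly_Mapping.lookup m v))"

text \<open>The difference polynomial ring A{y_0,...,y_(n-1)} as a subring.\<close>
definition dpolys :: "nat \<Rightarrow> ('s, 'a::comm_ring_1) dpoly set" where
  "dpolys n = {p. \<forall>m\<in>Poly_Mapping.keys p. \<forall>v\<in>Poly_Mapping.keys m. snd v < n}"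

definition is_ideal_in :: "'a::comm_ring_1 set \<Rightarrow> 'a set \<Rightarrow> bool" where
  "is_ideal_in R I \<longleftrightarrow> I \<subseteq> R \<and> 0 \<in> I \<and> (\<forall>x\<in>I. \<forall>y\<in>I. x + y \<in> I) \<and> (\<forall>r\<in>R. \<forall>x\<in>I. r * x \<in> I)"

definition radical_in :: "'a::comm_ring_1 set \<Rightarrow> 'a set \<Rightarrow> 'a set" where
  "radical_in R I = {f\<in>R. \<exists>k. f ^ k \<in> I}"

definition difference_closed :: "('s::{group_add,finite} \<Rightarrow> 'a::comm_ring_1 \<Rightarrow> 'a) \<Rightarrow> bool" where
  "difference_closed act \<longleftrightarrow> pseudofield act \<and>
     (\<forall>n. \<forall>I. is_ideal_in (dpolys n) I \<and> (\<forall>\<tau>. \<forall>f\<in>I. dpoly_act act \<tau> f \<in> I) \<longrightarrow>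
        radical_in (dpolys n) I =
          {f\<in>dpolys n. \<forall>x::nat \<Rightarrow> 'a. (\<forall>i\<ge>n. x i = 0) \<longrightarrow>
              (\<forall>g\<in>I. dpoly_eval act x g = 0) \<longrightarrow> dpoly_eval act x f = 0})"

definition algebraically_closed :: "'l::field itself \<Rightarrow> bool" where
  "algebraically_closed _ \<longleftrightarrow> (\<forall>p::'l poly. degree p > 0 \<longrightarrow> (\<exists>x. poly p x = 0))"

text \<open>L (a field) is an algebraic closure of A/M, the embedding A/M -> L being induced by phi.\<close>
definition algebraic_closure_of_quotient :: "('a::comm_ring_1 \<Rightarrow> 'l::field) \<Rightarrow> 'a set \<Rightarrow> bool" where
  "algebraic_closure_of_quotient \<phi> M \<longleftrightarrow> ring_hom \<phi> \<and> {a. \<phi> a = 0} = M \<and>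
     algebraically_closed TYPE('l) \<and>
     (\<forall>y::'l. \<exists>p. p \<noteq> 0 \<and> (\<forall>i. coeff p i \<in> range \<phi>) \<and> poly p y = 0)"

end

theory Submission
  imports Defs
begin


lemma rh0: "ring_hom f \<Longrightarrow> f 0 = 0"
  unfolding ring_hom_def by (metis add_cancel_right_right add_0)
lemma rh_add: "ring_hom f \<Longrightarrow> f (x + y) = f x + f y" unfolding ring_hom_def by blast
lemma rh_mult: "ring_hom f \<Longrightarrow> f (x * y) = f x * f y" unfolding ring_hom_def by blast
lemma rh_one: "ring_hom f \<Longrightarrow> f 1 = 1" unfolding ring_hom_def by blast
lemma rh_neg: "ring_hom f \<Longrightarrow> f (- x) = - f x"
  by (metis add.right_inverse add_eq_0_iff rh0 rh_add)
lemma rh_diff: "ring_hom f \<Longrightarrow> f (x - y) = f x - f y"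
  by (metis diff_conv_add_uminus rh_add rh_neg)
lemma rh_sum: "ring_hom f \<Longrightarrow> f (sum g S) = (\<Sum>x\<in>S. f (g x))"
  by (induction S rule: infinite_finite_induct) (auto simp: rh0 rh_add)
lemma rh_prod: "ring_hom f \<Longrightarrow> f (prod g S) = (\<Prod>x\<in>S. f (g x))"
  by (induction S rule: infinite_finite_induct) (auto simp: rh_one rh_mult)
lemma rh_pow: "ring_hom f \<Longrightarrow> f (x ^ n) = f x ^ n"
  by (induction n) (auto simp: rh_one rh_mult)
lemma rh_comp: "ring_hom f \<Longrightarrow> ring_hom g \<Longrightarrow> ring_hom (f \<circ> g)"
  unfolding ring_hom_def by auto
lemma rh_id: "ring_hom id" unfolding ring_hom_def by auto

definition mval :: "('v \<Rightarrow> 'c::comm_ring_1) \<Rightarrow> ('v \<Rightarrow>\<^sub>0 nat) \<Rightarrow> 'c" where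
  "mval val m = (\<Prod>v\<in>Poly_Mapping.keys m. val v ^ Poly_Mapping.lookup m v)"

definition ev :: "('a::comm_ring_1 \<Rightarrow> 'c::comm_ring_1) \<Rightarrow> ('v \<Rightarrow> 'c) \<Rightarrow> (('v \<Rightarrow>\<^sub>0 nat) \<Rightarrow>\<^sub>0 'a) \<Rightarrow> 'c" where
  "ev h val p = (\<Sum>m\<in>Poly_Mapping.keys p. h (Poly_Mapping.lookup p m) * mval val m)"

lemma mval_superset: "finite S \<Longrightarrow> Poly_Mapping.keys m \<subseteq> S \<Longrightarrow>
   mval val m = (\<Prod>v\<in>S. val v ^ Poly_Mapping.lookup m v)"
  unfolding mval_def by (rule prod.mono_neutral_left) (auto simp: in_keys_iff)

lemma mval_add: "mval val (m1 + m2) = mval val m1 * mval val m2"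
proof -
  let ?S = "Poly_Mapping.keys m1 \<union> Poly_Mapping.keys m2"
  have "mval val (m1 + m2) = (\<Prod>v\<in>?S. val v ^ Poly_Mapping.lookup (m1+m2) v)"
    using keys_add[of m1 m2] by (intro mval_superset) auto
  also have "\<dots> = (\<Prod>v\<in>?S. val v ^ Poly_Mapping.lookup m1 v) * (\<Prod>v\<in>?S. val v ^ Poly_Mapping.lookup m2 v)"
    by (simp add: lookup_add power_add prod.distrib)
  also have "\<dots> = mval val m1 * mval val m2"
    by (simp add: mval_superset[symmetric])
  finally show ?thesis .
qed

lemma mval_single: "mval val (Poly_Mapping.single v k) = val v ^ k"
  by (cases "k = 0") (auto simp: mval_def)

lemma mval_zero: "mval val 0 = 1" by (simp add: mval_def)

lemma ev_superset: "h 0 = 0 \<Longrightarrow> finite S \<Longrightarrow> Poly_Mapping.keys p \<subseteq> S \<Longrightarrow>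
   ev h val p = (\<Sum>m\<in>S. h (Poly_Mapping.lookup p m) * mval val m)"
  unfolding ev_def by (rule sum.mono_neutral_left) (auto simp: in_keys_iff)

lemma ev_add: assumes "ring_hom h" shows "ev h val (p + q) = ev h val p + ev h val q"
proof -
  let ?S = "Poly_Mapping.keys p \<union> Poly_Mapping.keys q"
  have h0: "h 0 = 0" using assms by (rule rh0)
  have "ev h val (p + q) = (\<Sum>m\<in>?S. h (Poly_Mapping.lookup (p+q) m) * mval val m)"
    using keys_add[of p q] by (intro ev_superset[where h=h, OF h0]) auto
  also have "\<dots> = (\<Sum>m\<in>?S. h (Poly_Mapping.lookup p m) * mval val m) + (\<Sum>m\<in>?S. h (Poly_Mapping.lookup q m) * mval val m)"
    by (simp add: lookup_add rh_add[OF assms] distrib_right sum.distrib)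
  also have "\<dots> = ev h val p + ev h val q"
    by (simp add: ev_superset[where h=h and S="?S" and p=p, OF h0, symmetric] ev_superset[where h=h and S="?S" and p=q, OF h0, symmetric])
  finally show ?thesis .
qed

lemma ev_zero: "ev h val 0 = 0" by (simp add: ev_def)

lemma ev_sum: assumes "ring_hom h" shows "ev h val (sum g S) = (\<Sum>x\<in>S. ev h val (g x))"
  by (induction S rule: infinite_finite_induct) (auto simp: ev_zero ev_add[OF assms])

lemma ev_single: assumes "h 0 = 0" shows "ev h val (Poly_Mapping.single m c) = h c * mval val m"
  using assms by (cases "c = 0") (auto simp: ev_def)

lemma pm_expand: "p = (\<Sum>m\<in>Poly_Mapping.keys p. Poly_Mapping.single m (Poly_Mapping.lookup p m))"
  by (rule poly_mapping_eqI) (auto simp: lookup_sum lookup_single when_def in_keys_iff)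

lemma mult_extend:
  fixes F :: "('m::comm_monoid_add \<Rightarrow>\<^sub>0 'a::comm_ring_1) \<Rightarrow> 'c::comm_ring_1"
  assumes add: "\<And>p q. F (p + q) = F p + F q"
   and sing: "\<And>m1 m2 a b. F (Poly_Mapping.single m1 a * Poly_Mapping.single m2 b) = F (Poly_Mapping.single m1 a) * F (Poly_Mapping.single m2 b)"
  shows "F (p * q) = F p * F q"
proof -
  have F0: "F 0 = 0" using add[of 0 0] by simp
  have Fs: "F (sum g S) = (\<Sum>x\<in>S. F (g x))" for g :: "'x \<Rightarrow> _" and S
    by (induction S rule: infinite_finite_induct) (auto simp: F0 add)
  let ?P = "Poly_Mapping.keys p" and ?Q = "Poly_Mapping.keys q"
  have "p * q = (\<Sum>m\<in>?P. Poly_Mapping.single m (Poly_Mapping.lookup p m)) * (\<Sum>m\<in>?Q. Poly_Mapping.single m (Poly_Mapping.lookup q m))"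
    by (subst pm_expand[of p], subst pm_expand[of q]) (rule refl)
  also have "\<dots> = (\<Sum>m\<in>?P. \<Sum>m'\<in>?Q. Poly_Mapping.single m (Poly_Mapping.lookup p m) * Poly_Mapping.single m' (Poly_Mapping.lookup q m'))"
    by (simp add: sum_distrib_left sum_distrib_right sum.swap[of _ ?Q])
  finally have "F (p * q) = (\<Sum>m\<in>?P. \<Sum>m'\<in>?Q. F (Poly_Mapping.single m (Poly_Mapping.lookup p m)) * F (Poly_Mapping.single m' (Poly_Mapping.lookup q m')))"
    by (simp add: Fs sing)
  also have "\<dots> = F p * F q"
    by (subst (3) pm_expand[of p], subst (3) pm_expand[of q]) (simp add: Fs sum_distrib_left sum_distrib_right sum.swap[of _ ?Q])
  finally show ?thesis .
qed

lemma ev_mult: assumes "ring_hom h" shows "ev h val (p * q) = ev h val p * ev h val q"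
proof (rule mult_extend[where F="ev h val"])
  show "ev h val (p + q) = ev h val p + ev h val q" for p q by (rule ev_add[OF assms])
  show "ev h val (Poly_Mapping.single m1 a * Poly_Mapping.single m2 b) = ev h val (Poly_Mapping.single m1 a) * ev h val (Poly_Mapping.single m2 b)" for m1 m2 a b
    by (simp add: mult_single ev_single rh0[OF assms] rh_mult[OF assms] mval_add)
qed

lemma ev_one: assumes "ring_hom h" shows "ev h val 1 = 1"
  using ev_single[where h=h and m=0 and c=1 and val=val] by (simp flip: single_one add: rh0[OF assms] rh_one[OF assms] mval_zero)

lemma ev_ring_hom: "ring_hom h \<Longrightarrow> ring_hom (ev h val)"
  unfolding ring_hom_def[of "ev h val"] by (simp add: ev_one ev_add ev_mult)

lemma dpoly_eval_ev: "dpoly_eval act x = ev id (\<lambda>v. act (fst v) (x (snd v)))"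
  by (simp add: fun_eq_iff dpoly_eval_def ev_def mval_def)


lemma shift_inj: "inj (\<lambda>(\<rho>, i). (- (\<tau>::'s::group_add) + \<rho>, i::nat))"
  by (auto simp: inj_def)
lemma mon_shift_lookup: "Poly_Mapping.lookup (mon_shift \<tau> m) (a, i) = Poly_Mapping.lookup m (- \<tau> + a, i)"
  unfolding mon_shift_def using shift_inj[of \<tau>]
  by (simp add: map_key.rep_eq)
lemma mon_shift_lookup': "Poly_Mapping.lookup (mon_shift \<tau> m) v = Poly_Mapping.lookup m (- \<tau> + fst v, snd v)"
  by (cases v) (simp add: mon_shift_lookup)
lemma mon_shift_comp: "mon_shift \<tau> (mon_shift \<rho> m) = mon_shift (\<tau> + \<rho>) m"
proof (rule poly_mapping_eqI)
  fix k :: "_ \<times> nat"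
  have "- \<rho> + (- \<tau> + fst k) = - (\<tau> + \<rho>) + fst k" by (metis add.assoc minus_add)
  then show "Poly_Mapping.lookup (mon_shift \<tau> (mon_shift \<rho> m)) k = Poly_Mapping.lookup (mon_shift (\<tau> + \<rho>) m) k"
    by (simp only: mon_shift_lookup' fst_conv snd_conv)
qed
lemma mon_shift_0: "mon_shift 0 m = m"
  by (rule poly_mapping_eqI) (simp add: mon_shift_lookup')
lemma mon_shift_inv1: "mon_shift (-\<tau>) (mon_shift \<tau> m) = m"
  by (simp add: mon_shift_comp mon_shift_0)
lemma mon_shift_inv2: "mon_shift \<tau> (mon_shift (-\<tau>) m) = m"
  by (simp add: mon_shift_comp mon_shift_0)
lemma mon_shift_inj: "inj (mon_shift \<tau>)"
  by (metis injI mon_shift_inv1)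
lemma mon_shift_add: "mon_shift \<tau> (m1 + m2) = mon_shift \<tau> m1 + mon_shift \<tau> m2"
  by (rule poly_mapping_eqI) (simp add: mon_shift_lookup' lookup_add)
lemma mon_shift_single: "mon_shift \<tau> (Poly_Mapping.single (a, i) k) = Poly_Mapping.single (\<tau> + a, i) k"
  by (rule poly_mapping_eqI) (auto simp: mon_shift_lookup' lookup_single when_def)

lemma dpoly_act_lookup:
  assumes "act \<tau> 0 = 0"
  shows "Poly_Mapping.lookup (dpoly_act act \<tau> p) k = act \<tau> (Poly_Mapping.lookup p (mon_shift (-\<tau>) k))"
  unfolding dpoly_act_def using assms mon_shift_inj[of "-\<tau>"]
  by (auto simp: map.rep_eq map_key.rep_eq when_def)

lemma dpoly_act_single:
  assumes "act \<tau> 0 = 0"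
  shows "dpoly_act act \<tau> (Poly_Mapping.single m c) = Poly_Mapping.single (mon_shift \<tau> m) (act \<tau> c)"
proof (rule poly_mapping_eqI)
  fix k
  have "(m = mon_shift (-\<tau>) k) = (mon_shift \<tau> m = k)"
    by (metis mon_shift_inv1 mon_shift_inv2)
  then show "Poly_Mapping.lookup (dpoly_act act \<tau> (Poly_Mapping.single m c)) k =
    Poly_Mapping.lookup (Poly_Mapping.single (mon_shift \<tau> m) (act \<tau> c)) k"
    using assms by (auto simp: dpoly_act_lookup lookup_single when_def)
qed

lemma dr_hom: "difference_ring act \<Longrightarrow> ring_hom (act \<sigma>)"
  unfolding difference_ring_def by blast
lemma dr_0: "difference_ring act \<Longrightarrow> act 0 x = x"
  unfolding difference_ring_def by simp
lemma dr_comp: "difference_ring act \<Longrightarrow> act (\<sigma> + \<tau>) x = act \<sigma> (act \<tau> x)"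
proof -
  assume "difference_ring act"
  then have "act (\<sigma> + \<tau>) = act \<sigma> \<circ> act \<tau>" unfolding difference_ring_def by blast
  then show ?thesis by simp
qed
lemma dr_inv1: assumes "difference_ring act" shows "act (-\<sigma>) (act \<sigma> x) = x"
proof -
  have "act (-\<sigma>) (act \<sigma> x) = act (-\<sigma> + \<sigma>) x" by (rule dr_comp[OF assms, symmetric])
  also have "\<dots> = x" by (simp add: dr_0[OF assms])
  finally show ?thesis .
qed
lemma dr_inv2: assumes "difference_ring act" shows "act \<sigma> (act (-\<sigma>) x) = x"
proof -
  have "act \<sigma> (act (-\<sigma>) x) = act (\<sigma> + -\<sigma>) x" by (rule dr_comp[OF assms, symmetric])
  also have "\<dots> = x" by (simp add: dr_0[OF assms])
  finally show ?thesis .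
qed
lemma dr_inj: "difference_ring act \<Longrightarrow> act \<sigma> x = act \<sigma> y \<Longrightarrow> x = y"
  by (metis dr_inv1)

lemma dal: assumes "difference_ring act"
  shows "Poly_Mapping.lookup (dpoly_act act \<tau> p) k = act \<tau> (Poly_Mapping.lookup p (mon_shift (-\<tau>) k))"
  by (rule dpoly_act_lookup, rule rh0[OF dr_hom[OF assms]])
lemma das: assumes "difference_ring act"
  shows "dpoly_act act \<tau> (Poly_Mapping.single m c) = Poly_Mapping.single (mon_shift \<tau> m) (act \<tau> c)"
  by (rule dpoly_act_single, rule rh0[OF dr_hom[OF assms]])

lemma dpoly_act_add:
  assumes "difference_ring act"
  shows "dpoly_act act \<tau> (p + q) = dpoly_act act \<tau> p + dpoly_act act \<tau> q"
proof (rule poly_mapping_eqI)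
  fix k
  have h0: "act \<tau> 0 = 0" by (rule rh0[OF dr_hom[OF assms]])
  show "Poly_Mapping.lookup (dpoly_act act \<tau> (p + q)) k = Poly_Mapping.lookup (dpoly_act act \<tau> p + dpoly_act act \<tau> q) k"
    by (simp only: dal[OF assms] lookup_add rh_add[OF dr_hom[OF assms]])
qed

lemma dpoly_act_mult:
  assumes "difference_ring act"
  shows "dpoly_act act \<tau> (p * q) = dpoly_act act \<tau> p * dpoly_act act \<tau> q"
proof (rule mult_extend)
  have h0: "act \<tau> 0 = 0" by (rule rh0[OF dr_hom[OF assms]])
  show "dpoly_act act \<tau> (p + q) = dpoly_act act \<tau> p + dpoly_act act \<tau> q" for p q
    by (rule dpoly_act_add[OF assms])
  show "dpoly_act act \<tau> (Poly_Mapping.single m1 a * Poly_Mapping.single m2 b) =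
        dpoly_act act \<tau> (Poly_Mapping.single m1 a) * dpoly_act act \<tau> (Poly_Mapping.single m2 b)" for m1 m2 a b
    by (simp only: das[OF assms] mult_single mon_shift_add rh_mult[OF dr_hom[OF assms]])
qed

lemma mon_shift_zero: "mon_shift \<tau> 0 = 0"
  by (rule poly_mapping_eqI) (simp add: mon_shift_lookup')

lemma dpoly_act_one:
  assumes "difference_ring act"
  shows "dpoly_act act \<tau> 1 = 1"
proof -
  have h0: "act \<tau> 0 = 0" by (rule rh0[OF dr_hom[OF assms]])
  have "dpoly_act act \<tau> (Poly_Mapping.single 0 1) = Poly_Mapping.single 0 1"
    by (simp only: das[OF assms] mon_shift_zero rh_one[OF dr_hom[OF assms]])
  then show ?thesis by simp
qed

lemma dpoly_act_hom: "difference_ring act \<Longrightarrow> ring_hom (dpoly_act act \<tau>)"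
  unfolding ring_hom_def[of "dpoly_act act \<tau>"] by (simp add: dpoly_act_one dpoly_act_add dpoly_act_mult)

lemma dpoly_act_comp:
  assumes "difference_ring act"
  shows "dpoly_act act \<tau> (dpoly_act act \<rho> p) = dpoly_act act (\<tau> + \<rho>) p"
proof (rule poly_mapping_eqI)
  fix k
  have h0: "act \<sigma> 0 = 0" for \<sigma> by (rule rh0[OF dr_hom[OF assms]])
  have "mon_shift (-\<rho>) (mon_shift (-\<tau>) k) = mon_shift (-(\<tau>+\<rho>)) k"
    by (simp only: mon_shift_comp minus_add)
  then show "Poly_Mapping.lookup (dpoly_act act \<tau> (dpoly_act act \<rho> p)) k = Poly_Mapping.lookup (dpoly_act act (\<tau> + \<rho>) p) k"
    by (simp only: dal[OF assms] dr_comp[OF assms])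
qed

lemma dpolys_act:
  assumes "difference_ring act" "p \<in> dpolys n"
  shows "dpoly_act act \<tau> p \<in> dpolys n"
  unfolding dpolys_def
proof (intro CollectI ballI)
  fix k v assume k: "k \<in> Poly_Mapping.keys (dpoly_act act \<tau> p)" and v: "v \<in> Poly_Mapping.keys k"
  have h0: "act \<tau> 0 = 0" by (rule rh0[OF dr_hom[OF assms(1)]])
  have "Poly_Mapping.lookup p (mon_shift (-\<tau>) k) \<noteq> 0"
    using k h0 by (auto simp: in_keys_iff dal[OF assms(1)])
  hence km: "mon_shift (-\<tau>) k \<in> Poly_Mapping.keys p" by (simp add: in_keys_iff)
  have "Poly_Mapping.lookup (mon_shift (-\<tau>) k) (-\<tau> + fst v, snd v) \<noteq> 0"
    using v by (simp add: mon_shift_lookup' in_keys_iff)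
  hence "(-\<tau> + fst v, snd v) \<in> Poly_Mapping.keys (mon_shift (-\<tau>) k)" by (simp add: in_keys_iff)
  with km assms(2) show "snd v < n" unfolding dpolys_def by fastforce
qed


lemma ideal_0: "is_ideal I \<Longrightarrow> 0 \<in> I" unfolding is_ideal_def by blast
lemma ideal_add: "is_ideal I \<Longrightarrow> x \<in> I \<Longrightarrow> y \<in> I \<Longrightarrow> x + y \<in> I" unfolding is_ideal_def by blast
lemma ideal_mult: "is_ideal I \<Longrightarrow> x \<in> I \<Longrightarrow> r * x \<in> I" unfolding is_ideal_def by blast
lemma ideal_mult2: "is_ideal I \<Longrightarrow> x \<in> I \<Longrightarrow> x * r \<in> I" unfolding is_ideal_def by (metis mult.commute)
lemma ideal_neg: "is_ideal I \<Longrightarrow> x \<in> I \<Longrightarrow> - x \<in> I"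
  using ideal_mult[of I x "-1"] by simp
lemma ideal_diff: "is_ideal I \<Longrightarrow> x \<in> I \<Longrightarrow> y \<in> I \<Longrightarrow> x - y \<in> I"
  using ideal_add[of I x "-y"] ideal_neg[of I y] by simp
lemma ideal_UNIV: "is_ideal I \<Longrightarrow> 1 \<in> I \<Longrightarrow> I = UNIV"
  using ideal_mult[of I 1] by auto
lemma ideal_sum: "is_ideal I \<Longrightarrow> (\<And>x. x \<in> S \<Longrightarrow> g x \<in> I) \<Longrightarrow> sum g S \<in> I"
  by (induction S rule: infinite_finite_induct) (auto simp: ideal_0 ideal_add)

lemma maximal_exists:
  assumes "(0::'a::comm_ring_1) \<noteq> 1"
  shows "\<exists>n::'a set. maximal_ideal n"
proof -
  let ?S = "{I::'a set. is_ideal I \<and> 1 \<notin> I}"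
  have "\<exists>M\<in>?S. \<forall>X\<in>?S. M \<subseteq> X \<longrightarrow> X = M"
  proof (rule Zorn_Lemma2, intro ballI)
    fix C assume C: "C \<in> chains ?S"
    show "\<exists>U\<in>?S. \<forall>X\<in>C. X \<subseteq> U"
    proof (cases "C = {}")
      case True
      have "is_ideal {0::'a}" unfolding is_ideal_def by simp
      with True assms show ?thesis by auto
    next
      case False
      have sub: "C \<subseteq> ?S" using C by (rule chainsD2)
      have "is_ideal (\<Union>C)" unfolding is_ideal_def
      proof (intro conjI ballI allI)
        show "0 \<in> \<Union>C" using False sub ideal_0 by blast
        fix x y assume "x \<in> \<Union>C" "y \<in> \<Union>C"
        then obtain X Y where XY: "X \<in> C" "Y \<in> C" "x \<in> X" "y \<in> Y" by blast
        from chainsD[OF C XY(1,2)] show "x + y \<in> \<Union>C"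
        proof
          assume "X \<subseteq> Y" then show ?thesis using XY sub ideal_add by blast
        next
          assume "Y \<subseteq> X" then show ?thesis using XY sub ideal_add by blast
        qed
      next
        fix r x assume "x \<in> \<Union>C"
        then show "r * x \<in> \<Union>C" using sub ideal_mult by blast
      qed
      moreover have "1 \<notin> \<Union>C" using sub by blast
      ultimately show ?thesis by blast
    qed
  qed
  then obtain M where M: "is_ideal M" "1 \<notin> M" and mx: "\<forall>X\<in>?S. M \<subseteq> X \<longrightarrow> X = M" by blast
  have "maximal_ideal M" unfolding maximal_ideal_def
  proof (intro conjI allI impI)
    show "M \<noteq> UNIV" using M by blast
    fix J assume J: "is_ideal J \<and> M \<subseteq> J"
    show "J = M \<or> J = UNIV"
    proof (cases "1 \<in> J")
      case True then show ?thesis using J ideal_UNIV by blast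
    next
      case False then show ?thesis using J mx by blast
    qed
  qed (use M in auto)
  then show ?thesis by blast
qed

lemma maximal_ideal_is: "maximal_ideal M \<Longrightarrow> is_ideal M" unfolding maximal_ideal_def by blast
lemma maximal_one: "maximal_ideal M \<Longrightarrow> 1 \<notin> M"
  unfolding maximal_ideal_def using ideal_UNIV by blast

lemma maximal_inv:
  assumes "maximal_ideal M" "a \<notin> M"
  shows "\<exists>r. 1 - r * a \<in> M"
proof -
  let ?J = "{m + r * a |m r. m \<in> M}"
  have I: "is_ideal M" using assms(1) by (rule maximal_ideal_is)
  have "is_ideal ?J" unfolding is_ideal_def
  proof (intro conjI ballI allI)
    have "(0::'a) = 0 + 0 * a" by simp
    then show "0 \<in> ?J" using ideal_0[OF I] by blast
    fix x y assume "x \<in> ?J" "y \<in> ?J"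
    then obtain m r m' r' where "x = m + r * a" "y = m' + r' * a" "m \<in> M" "m' \<in> M" by blast
    then show "x + y \<in> ?J"
      by (intro CollectI exI[of _ "m + m'"] exI[of _ "r + r'"]) (simp add: algebra_simps ideal_add[OF I])
  next
    fix s x assume "x \<in> ?J"
    then obtain m r where "x = m + r * a" "m \<in> M" by blast
    then have "s * x = s * m + (s * r) * a" "s * m \<in> M" by (simp add: algebra_simps) (rule ideal_mult[OF I \<open>m \<in> M\<close>])
    then show "s * x \<in> ?J" by blast
  qed
  moreover have "M \<subseteq> ?J"
  proof
    fix x assume "x \<in> M" moreover have "x = x + 0 * a" by simp
    ultimately show "x \<in> ?J" by blast
  qed
  moreover have "a \<in> ?J"
  proof -
    have "a = 0 + 1 * a" by simp
    then show ?thesis using ideal_0[OF I] by blast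
  qed
  ultimately have "?J = UNIV" using assms unfolding maximal_ideal_def by blast
  then obtain m r where "1 = m + r * a" "m \<in> M" by blast
  then have "1 - r * a = m" by (simp add: algebra_simps)
  then show ?thesis using \<open>m \<in> M\<close> by blast
qed

lemma maximal_prime:
  assumes "maximal_ideal M" "a * b \<in> M" "a \<notin> M"
  shows "b \<in> M"
proof -
  obtain r where r: "1 - r * a \<in> M" using maximal_inv[OF assms(1,3)] by blast
  have I: "is_ideal M" using assms(1) by (rule maximal_ideal_is)
  have "b = (1 - r * a) * b + r * (a * b)" by (simp add: algebra_simps)
  also have "\<dots> \<in> M" using ideal_add[OF I ideal_mult2[OF I r] ideal_mult[OF I assms(2)]] .
  finally show ?thesis .
qed

lemma pf_dr: "pseudofield act \<Longrightarrow> difference_ring act" unfolding pseudofield_def by blast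
lemma pf_flat: "pseudofield (act :: _ \<Rightarrow> 'a::comm_ring_1 \<Rightarrow> 'a) \<Longrightarrow> \<exists>x. (a::'a) = a * a * x"
  unfolding pseudofield_def absolutely_flat_def by blast
lemma pf_01: "pseudofield (act :: _ \<Rightarrow> 'a::comm_ring_1 \<Rightarrow> 'a) \<Longrightarrow> (0::'a) \<noteq> 1"
  unfolding pseudofield_def by blast
lemma pf_simple: "pseudofield act \<Longrightarrow> is_ideal I \<Longrightarrow> stable act I \<Longrightarrow> 1 \<notin> I \<Longrightarrow> I = {0}"
  unfolding pseudofield_def by blast


locale bs =
  fixes act :: "'s::{group_add,finite} \<Rightarrow> 'b::comm_ring_1 \<Rightarrow> 'b" and n :: "'b set"
  assumes pf: "pseudofield act" and mx: "maximal_ideal n"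
begin

lemma dr: "difference_ring act" using pf by (rule pf_dr)
lemma hom: "ring_hom (act \<sigma>)" by (rule dr_hom[OF dr])
lemma nI: "is_ideal n" using mx by (rule maximal_ideal_is)

definition N :: "'s \<Rightarrow> 'b set" where "N \<rho> = {b. act (-\<rho>) b \<in> n}"

lemma N_ideal: "is_ideal (N \<rho>)"
  unfolding is_ideal_def N_def
  using nI by (auto simp: rh0[OF hom] rh_add[OF hom] rh_mult[OF hom] ideal_0 ideal_add ideal_mult)

lemma N_one: "1 \<notin> N \<rho>" unfolding N_def using maximal_one[OF mx] by (simp add: rh_one[OF hom])

lemma N_0: "N 0 = n" unfolding N_def by (simp add: dr_0[OF dr])

lemma N_shift_iff: "act \<sigma> x \<in> N \<rho> \<longleftrightarrow> x \<in> N (-\<sigma> + \<rho>)"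
proof -
  have "act (-\<rho>) (act \<sigma> x) = act (-(-\<sigma> + \<rho>)) x"
    by (simp add: dr_comp[OF dr, symmetric] minus_add)
  then show ?thesis unfolding N_def by simp
qed

lemma N_shift: "x \<in> N \<rho> \<Longrightarrow> act \<sigma> x \<in> N (\<sigma> + \<rho>)"
  by (simp add: N_shift_iff add.assoc[symmetric])

lemma N_cong: "N \<rho> = N \<rho>' \<Longrightarrow> N (\<sigma> + \<rho>) = N (\<sigma> + \<rho>')"
proof -
  assume eq: "N \<rho> = N \<rho>'"
  have "x \<in> N (\<sigma> + \<rho>) \<longleftrightarrow> act (-\<sigma>) x \<in> N \<rho>" for x \<rho>
    by (simp add: N_shift_iff)
  then show ?thesis using eq by auto
qed

lemma N_max: "maximal_ideal (N \<rho>)"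
  unfolding maximal_ideal_def
proof (intro conjI allI impI)
  show "is_ideal (N \<rho>)" by (rule N_ideal)
  show "N \<rho> \<noteq> UNIV" using N_one by blast
  fix J assume J: "is_ideal J \<and> N \<rho> \<subseteq> J"
  let ?J' = "{b. act \<rho> b \<in> J}"
  have "is_ideal ?J'" using J unfolding is_ideal_def
    by (auto simp: rh0[OF hom] rh_add[OF hom] rh_mult[OF hom])
  moreover have "n \<subseteq> ?J'"
  proof
    fix b assume "b \<in> n"
    then have "act \<rho> b \<in> N \<rho>" unfolding N_def by (simp add: dr_inv1[OF dr])
    with J show "b \<in> ?J'" by blast
  qed
  ultimately have "?J' = n \<or> ?J' = UNIV" using mx unfolding maximal_ideal_def by blast
  then show "J = N \<rho> \<or> J = UNIV"
  proof
    assume "?J' = n"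
    have "J \<subseteq> N \<rho>"
    proof
      fix x assume "x \<in> J"
      then have "act (-\<rho>) x \<in> ?J'" by (simp add: dr_inv2[OF dr])
      then show "x \<in> N \<rho>" using \<open>?J' = n\<close> unfolding N_def by simp
    qed
    then show ?thesis using J by blast
  next
    assume "?J' = UNIV"
    then have "act \<rho> 1 \<in> J" by blast
    then have "1 \<in> J" by (simp add: rh_one[OF hom])
    then show ?thesis using J ideal_UNIV by blast
  qed
qed

lemma N_prime: "a * b \<in> N \<rho> \<Longrightarrow> a \<notin> N \<rho> \<Longrightarrow> b \<in> N \<rho>"
  using maximal_prime[OF N_max] by blast

lemma N_inter: assumes "\<And>\<rho>. x \<in> N \<rho>" shows "x = 0"
proof -
  let ?Z = "{b. \<forall>\<rho>. b \<in> N \<rho>}"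
  have "is_ideal ?Z" unfolding is_ideal_def using N_ideal
    by (auto simp: ideal_0 ideal_add ideal_mult)
  moreover have "stable act ?Z" unfolding stable_def
  proof (intro allI ballI)
    fix \<sigma> x assume "x \<in> ?Z"
    then have "x \<in> N (-\<sigma> + \<rho>)" for \<rho> by blast
    then show "act \<sigma> x \<in> ?Z" by (simp add: N_shift_iff)
  qed
  moreover have "1 \<notin> ?Z" using N_one by blast
  ultimately have "?Z = {0}" using pf_simple[OF pf] by blast
  with assms show ?thesis by blast
qed

lemma f_ex: assumes "N \<rho> \<noteq> n" shows "\<exists>f. f * f = f \<and> f \<in> N \<rho> \<and> 1 - f \<in> n"
proof -
  have "\<not> N \<rho> \<subseteq> n"
  proof
    assume "N \<rho> \<subseteq> n"
    then have "n = N \<rho> \<or> n = UNIV" using N_max nI unfolding maximal_ideal_def by blast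
    then show False using assms maximal_one[OF mx] by auto
  qed
  then obtain a where a: "a \<in> N \<rho>" "a \<notin> n" by blast
  obtain x where x: "a = a * a * x" using pf_flat[OF pf] by blast
  let ?f = "a * x"
  have "?f * ?f = ?f" by (metis x mult.assoc mult.left_commute)
  moreover have "?f \<in> N \<rho>" using a N_ideal ideal_mult2 by blast
  moreover have "?f \<notin> n"
  proof
    assume "?f \<in> n" then have "a * ?f \<in> n" using nI ideal_mult by blast
    then show False using a x by (simp add: mult.assoc)
  qed
  moreover have "?f * (1 - ?f) \<in> n" using \<open>?f * ?f = ?f\<close> ideal_0[OF nI] by (simp add: algebra_simps)
  ultimately show ?thesis using maximal_prime[OF mx] by blast
qed

definition fsel :: "'s \<Rightarrow> 'b" where "fsel \<rho> = (SOME f. f * f = f \<and> f \<in> N \<rho> \<and> 1 - f \<in> n)"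

lemma fsel: "N \<rho> \<noteq> n \<Longrightarrow> fsel \<rho> * fsel \<rho> = fsel \<rho> \<and> fsel \<rho> \<in> N \<rho> \<and> 1 - fsel \<rho> \<in> n"
  unfolding fsel_def by (rule someI_ex, rule f_ex)

definition u :: 'b where "u = (\<Prod>\<rho>\<in>{\<rho>. N \<rho> \<noteq> n}. fsel \<rho>)"

lemma u_idem: "u * u = u"
proof -
  have "\<And>S. S \<subseteq> {\<rho>. N \<rho> \<noteq> n} \<Longrightarrow> (\<Prod>\<rho>\<in>S. fsel \<rho>) * (\<Prod>\<rho>\<in>S. fsel \<rho>) = (\<Prod>\<rho>\<in>S. fsel \<rho>)"
  proof -
    fix S :: "'s set" assume "S \<subseteq> {\<rho>. N \<rho> \<noteq> n}"
    with finite[of S] show "(\<Prod>\<rho>\<in>S. fsel \<rho>) * (\<Prod>\<rho>\<in>S. fsel \<rho>) = (\<Prod>\<rho>\<in>S. fsel \<rho>)"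
    proof (induction S rule: finite_induct)
      case (insert x F)
      have "fsel x * fsel x = fsel x" using fsel insert.prems by blast
      then show ?case using insert by (simp add: algebra_simps) (metis mult.assoc mult.left_commute)
    qed simp
  qed
  then show ?thesis unfolding u_def by blast
qed

lemma u_in: "N \<rho> \<noteq> n \<Longrightarrow> u \<in> N \<rho>"
proof -
  assume h: "N \<rho> \<noteq> n"
  have "u = fsel \<rho> * (\<Prod>\<rho>'\<in>{\<rho>. N \<rho> \<noteq> n} - {\<rho>}. fsel \<rho>')"
    unfolding u_def using h by (subst prod.remove[of _ \<rho>]) auto
  then show ?thesis using fsel[OF h] N_ideal ideal_mult2 by metis
qed

lemma u_one: "1 - u \<in> n"
proof -
  have "\<And>S. S \<subseteq> {\<rho>. N \<rho> \<noteq> n} \<Longrightarrow> 1 - (\<Prod>\<rho>\<in>S. fsel \<rho>) \<in> n"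
  proof -
    fix S :: "'s set" assume "S \<subseteq> {\<rho>. N \<rho> \<noteq> n}"
    with finite[of S] show "1 - (\<Prod>\<rho>\<in>S. fsel \<rho>) \<in> n"
    proof (induction S rule: finite_induct)
      case empty then show ?case using ideal_0[OF nI] by simp
    next
      case (insert x F)
      have a: "1 - fsel x \<in> n" using fsel insert.prems by blast
      have b: "1 - (\<Prod>\<rho>\<in>F. fsel \<rho>) \<in> n" using insert by blast
      have "1 - (\<Prod>\<rho>\<in>insert x F. fsel \<rho>) = (1 - fsel x) + fsel x * (1 - (\<Prod>\<rho>\<in>F. fsel \<rho>))"
        using insert by (simp add: algebra_simps)
      also have "\<dots> \<in> n" using a b nI ideal_add ideal_mult by blast
      finally show ?case .
    qed
  qed
  then show ?thesis unfolding u_def by blast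
qed

lemma u_notin: "u \<notin> n"
proof
  assume "u \<in> n"
  then have "(1 - u) + u \<in> n" using u_one nI ideal_add by blast
  then show False using maximal_one[OF mx] by simp
qed

lemma u_nz: "u \<noteq> 0" using u_notin ideal_0[OF nI] by auto

lemma u_field: assumes "u * b \<noteq> 0" shows "\<exists>c. u * b * c = u"
proof -
  obtain \<rho> where r: "u * b \<notin> N \<rho>" using N_inter assms by blast
  have "N \<rho> = n"
  proof (rule ccontr)
    assume "N \<rho> \<noteq> n" then have "u \<in> N \<rho>" by (rule u_in)
    then show False using r N_ideal ideal_mult2 by blast
  qed
  with r have ub: "u * b \<notin> n" by simp
  have bn: "b \<notin> n" using ub nI ideal_mult by blast
  obtain x where x: "b = b * b * x" using pf_flat[OF pf] by blast
  let ?f = "b * x"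
  have idem: "?f * ?f = ?f" by (metis x mult.assoc mult.left_commute)
  have "?f \<notin> n"
  proof
    assume "?f \<in> n" then have "b * ?f \<in> n" using nI ideal_mult by blast
    then show False using bn x by (simp add: mult.assoc)
  qed
  moreover have "?f * (1 - ?f) \<in> n" using idem ideal_0[OF nI] by (simp add: algebra_simps)
  ultimately have f1: "1 - ?f \<in> n" using maximal_prime[OF mx] by blast
  have "u * (1 - ?f) = 0"
  proof (rule N_inter)
    fix \<tau> show "u * (1 - ?f) \<in> N \<tau>"
    proof (cases "N \<tau> = n")
      case True then show ?thesis using f1 nI ideal_mult by simp
    next
      case False then show ?thesis using u_in N_ideal ideal_mult2 by blast
    qed
  qed
  then have "u * b * x = u" by (simp add: algebra_simps)
  then show ?thesis by blast
qed

lemma N_n_shift: "N \<rho> = n \<Longrightarrow> N (\<sigma> + \<rho>) = N \<sigma>"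
  using N_cong[of \<rho> 0 \<sigma>] N_0 by simp

lemma u_stab: assumes "N \<sigma> = n" shows "act \<sigma> u = u"
proof -
  have "u - act \<sigma> u = 0"
  proof (rule N_inter)
    fix \<tau> show "u - act \<sigma> u \<in> N \<tau>"
    proof (cases "N \<tau> = n")
      case True
      have "act \<sigma> (1 - u) \<in> N (\<sigma> + 0)" using N_shift[of "1 - u" 0 \<sigma>] u_one N_0 by simp
      then have "1 - act \<sigma> u \<in> n" using assms by (simp add: rh_diff[OF hom] rh_one[OF hom])
      then have "(1 - act \<sigma> u) - (1 - u) \<in> n" using u_one nI ideal_diff by blast
      then show ?thesis using True by simp
    next
      case False
      have "N (-\<sigma> + \<tau>) \<noteq> n"
      proof
        assume "N (-\<sigma> + \<tau>) = n"
        then have "N (\<sigma> + (-\<sigma> + \<tau>)) = N \<sigma>" by (rule N_n_shift)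
        then show False using False assms by (simp add: add.assoc[symmetric])
      qed
      then have "u \<in> N (-\<sigma> + \<tau>)" by (rule u_in)
      then have "act \<sigma> u \<in> N \<tau>" by (simp add: N_shift_iff)
      moreover have "u \<in> N \<tau>" using False by (rule u_in)
      ultimately show ?thesis using N_ideal ideal_diff by blast
    qed
  qed
  then show ?thesis by simp
qed

end


lemma dpolys_0: "0 \<in> dpolys n" unfolding dpolys_def by simp
lemma dpolys_add: "p \<in> dpolys n \<Longrightarrow> q \<in> dpolys n \<Longrightarrow> p + q \<in> dpolys n"
  unfolding dpolys_def using keys_add[of p q] by blast
lemma dpolys_mult: assumes "p \<in> dpolys n" "q \<in> dpolys n" shows "p * q \<in> dpolys n"
  unfolding dpolys_def
proof (intro CollectI ballI)
  fix m v assume m: "m \<in> Poly_Mapping.keys (p * q)" and v: "v \<in> Poly_Mapping.keys m"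
  obtain a b where ab: "m = a + b" "a \<in> Poly_Mapping.keys p" "b \<in> Poly_Mapping.keys q"
    using keys_mult[of p q] m by blast
  have "v \<in> Poly_Mapping.keys a \<or> v \<in> Poly_Mapping.keys b" using keys_add[of a b] v ab by blast
  then show "snd v < n" using assms ab unfolding dpolys_def by blast
qed

definition genI :: "('s::{group_add,finite} \<Rightarrow> 'a::comm_ring_1 \<Rightarrow> 'a) \<Rightarrow> ('s, 'a) dpoly \<Rightarrow> ('s, 'a) dpoly set" where
  "genI act g = {f \<in> dpolys 1. \<exists>h. f = (\<Sum>\<rho>\<in>UNIV. h \<rho> * dpoly_act act \<rho> g)}"

lemma genI_intro: "f \<in> dpolys 1 \<Longrightarrow> f = (\<Sum>\<rho>\<in>UNIV. h \<rho> * dpoly_act act \<rho> g) \<Longrightarrow> f \<in> genI act g"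
  unfolding genI_def by blast

lemma dpoly_act_0: "difference_ring act \<Longrightarrow> dpoly_act act 0 p = p"
  by (rule poly_mapping_eqI) (simp add: dal mon_shift_0 dr_0)

lemma genI_ideal: fixes act :: "'s::{group_add,finite} \<Rightarrow> 'a::comm_ring_1 \<Rightarrow> 'a"
  assumes "difference_ring act"
  shows "is_ideal_in (dpolys 1) (genI act g)"
  unfolding is_ideal_in_def
proof (intro conjI ballI)
  show "genI act g \<subseteq> dpolys 1" unfolding genI_def by blast
  show "0 \<in> genI act g" unfolding genI_def using dpolys_0 by (auto intro!: exI[of _ "\<lambda>_. 0"])
  fix x y assume "x \<in> genI act g" "y \<in> genI act g"
  then obtain h h' where "x = (\<Sum>\<rho>\<in>UNIV. h \<rho> * dpoly_act act \<rho> g)" "y = (\<Sum>\<rho>\<in>UNIV. h' \<rho> * dpoly_act act \<rho> g)"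
    "x \<in> dpolys 1" "y \<in> dpolys 1" unfolding genI_def by blast
  moreover have "x + y = (\<Sum>\<rho>\<in>UNIV. (h \<rho> + h' \<rho>) * dpoly_act act \<rho> g)"
    using calculation by (simp add: sum.distrib distrib_right)
  moreover have "x + y \<in> dpolys 1" using calculation dpolys_add by blast
  ultimately show "x + y \<in> genI act g" by (intro genI_intro[where h="\<lambda>\<rho>. h \<rho> + h' \<rho>"])
next
  fix r x :: "('s, 'a) dpoly" assume "r \<in> dpolys 1" "x \<in> genI act g"
  then obtain h where "x = (\<Sum>\<rho>\<in>UNIV. h \<rho> * dpoly_act act \<rho> g)" "x \<in> dpolys 1" "r \<in> dpolys 1" unfolding genI_def by blast
  then have "r * x \<in> dpolys 1" "r * x = (\<Sum>\<rho>\<in>UNIV. (r * h \<rho>) * dpoly_act act \<rho> g)"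
    by (simp_all only: dpolys_mult) (simp add: sum_distrib_left mult.assoc)
  then show "r * x \<in> genI act g"
    by (intro genI_intro[where h="\<lambda>\<rho>. r * h \<rho>"])
qed

lemma genI_stable: assumes "difference_ring act" "f \<in> genI act g"
  shows "dpoly_act act \<tau> f \<in> genI act g"
proof -
  obtain h where f: "f = (\<Sum>\<rho>\<in>UNIV. h \<rho> * dpoly_act act \<rho> g)" "f \<in> dpolys 1"
    using assms(2) unfolding genI_def by blast
  have hom: "ring_hom (dpoly_act act \<tau>)" by (rule dpoly_act_hom[OF assms(1)])
  have "dpoly_act act \<tau> f = (\<Sum>\<rho>\<in>UNIV. dpoly_act act \<tau> (h \<rho>) * dpoly_act act (\<tau> + \<rho>) g)"
    by (simp add: f rh_sum[OF hom] rh_mult[OF hom] dpoly_act_comp[OF assms(1)])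
  also have "\<dots> = (\<Sum>\<rho>\<in>UNIV. dpoly_act act \<tau> (h (-\<tau> + \<rho>)) * dpoly_act act \<rho> g)"
    by (rule sum.reindex_bij_witness[where i="\<lambda>\<rho>. -\<tau> + \<rho>" and j="\<lambda>\<rho>. \<tau> + \<rho>"])
       (simp_all add: add.assoc[symmetric])
  moreover have "dpoly_act act \<tau> f \<in> dpolys 1" using dpolys_act[OF assms(1) f(2)] .
  ultimately show ?thesis by (intro genI_intro[where h="\<lambda>\<rho>. dpoly_act act \<tau> (h (-\<tau> + \<rho>))"]) simp_all
qed

lemma genI_gen: assumes "difference_ring act" "g \<in> dpolys 1" shows "g \<in> genI act g"
proof -
  have "(\<Sum>\<rho>\<in>UNIV. (if \<rho> = 0 then 1 else 0) * dpoly_act act \<rho> g) = g"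
  proof -
    have "(\<Sum>\<rho>\<in>UNIV. (if \<rho> = 0 then 1 else 0) * dpoly_act act \<rho> g) = (\<Sum>\<rho>\<in>UNIV. if \<rho> = 0 then dpoly_act act \<rho> g else 0)"
      by (rule sum.cong) auto
    also have "\<dots> = g" by (simp add: dpoly_act_0[OF assms(1)])
    finally show ?thesis .
  qed
  then show ?thesis unfolding genI_def using assms(2) by (auto intro!: exI[of _ "\<lambda>\<rho>. if \<rho> = 0 then 1 else 0"])
qed

lemma dc_pf: "difference_closed act \<Longrightarrow> pseudofield act" unfolding difference_closed_def by blast

lemma dc_use:
  assumes "difference_closed act" "g \<in> dpolys 1"
  shows "radical_in (dpolys 1) (genI act g) = {f\<in>dpolys 1. \<forall>x. (\<forall>i\<ge>1. x i = 0) \<longrightarrow>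
              (\<forall>g'\<in>genI act g. dpoly_eval act x g' = 0) \<longrightarrow> dpoly_eval act x f = 0}"
proof -
  have dr: "difference_ring act" using assms(1) unfolding difference_closed_def pseudofield_def by blast
  show ?thesis using assms(1) genI_ideal[OF dr, of g] genI_stable[OF dr] unfolding difference_closed_def by blast
qed


lemma keys_single_sub: "Poly_Mapping.keys (Poly_Mapping.single k v) \<subseteq> {k}" by simp

locale bsc = bs act n for act :: "'s::{group_add,finite} \<Rightarrow> 'b::comm_ring_1 \<Rightarrow> 'b" and n +
  assumes dc: "difference_closed act"
begin

lemma stab: assumes N\<sigma>: "N \<sigma> = n" shows "\<sigma> = 0"
proof (rule ccontr)
  assume s0: "\<sigma> \<noteq> 0"
  define m :: "'s \<times> nat \<Rightarrow>\<^sub>0 nat" where "m = Poly_Mapping.single (0,0) 1 + Poly_Mapping.single (\<sigma>,0) 1"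
  define g :: "('s, 'b) dpoly" where "g = Poly_Mapping.single m u"
  define f :: "('s, 'b) dpoly" where "f = Poly_Mapping.single (Poly_Mapping.single (0,0) 1) u"
  have gd: "g \<in> dpolys 1" unfolding dpolys_def g_def m_def
    using keys_single_sub keys_add by fastforce
  have fd: "f \<in> dpolys 1" unfolding dpolys_def f_def
    using keys_single_sub by fastforce
  have evg: "dpoly_eval act x g = u * (x 0 * act \<sigma> (x 0))" for x
    by (simp add: dpoly_eval_ev g_def m_def ev_single mval_add mval_single dr_0[OF dr])
  have evf: "dpoly_eval act x f = u * x 0" for x
    by (simp add: dpoly_eval_ev f_def ev_single mval_single dr_0[OF dr])
  have van: "dpoly_eval act x f = 0" if "\<forall>g'\<in>genI act g. dpoly_eval act x g' = 0" for x
  proof -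
    have "u * (x 0 * act \<sigma> (x 0)) = 0" using that genI_gen[OF dr gd] evg by metis
    have "u * x 0 = 0"
    proof (rule ccontr)
      assume nz: "u * x 0 \<noteq> 0"
      then obtain c where c: "u * x 0 * c = u" using u_field by blast
      have us: "act \<sigma> u = u" by (rule u_stab[OF N\<sigma>])
      have "act \<sigma> (u * x 0) = u * act \<sigma> (x 0)" by (simp add: rh_mult[OF hom] us)
      have "u * act \<sigma> (x 0) = (u * x 0 * c) * act \<sigma> (x 0)" using c by simp
      also have "\<dots> = c * (u * (x 0 * act \<sigma> (x 0)))" by (simp add: algebra_simps)
      also have "\<dots> = 0" using \<open>u * (x 0 * act \<sigma> (x 0)) = 0\<close> by simp
      finally have "act \<sigma> (u * x 0) = act \<sigma> 0" using \<open>act \<sigma> (u * x 0) = u * act \<sigma> (x 0)\<close> rh0[OF hom] by simp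
      then have "u * x 0 = 0" by (rule dr_inj[OF dr])
      with nz show False by simp
    qed
    then show ?thesis by (simp add: evf)
  qed
  have "f \<in> radical_in (dpolys 1) (genI act g)"
    using dc_use[OF dc gd] fd van by blast
  then obtain k where "f ^ k \<in> genI act g" unfolding radical_in_def by blast
  then obtain h where fk: "f ^ k = (\<Sum>\<rho>\<in>UNIV. h \<rho> * dpoly_act act \<rho> g)" unfolding genI_def by blast
  define val0 :: "'s \<times> nat \<Rightarrow> 'b" where "val0 v = (if v = (0,0) then u else 0)" for v
  let ?E = "ev id val0"
  have Eh: "ring_hom ?E" by (rule ev_ring_hom[OF rh_id])
  have "?E f = u" by (simp add: f_def ev_single mval_single val0_def u_idem)
  then have "?E (f ^ k) = u ^ k" by (simp add: rh_pow[OF Eh])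
  moreover have "u ^ k \<noteq> 0"
  proof (cases k)
    case 0 then show ?thesis using pf_01[OF pf] by simp
  next
    case (Suc j)
    have "u ^ Suc j = u" by (induction j) (simp_all add: u_idem)
    then show ?thesis using Suc u_nz by simp
  qed
  moreover have "?E (dpoly_act act \<rho> g) = 0" for \<rho>
  proof -
    have "mon_shift \<rho> m = Poly_Mapping.single (\<rho>,0) 1 + Poly_Mapping.single (\<rho> + \<sigma>,0) 1"
      by (simp add: m_def mon_shift_add mon_shift_single)
    moreover have "val0 (\<rho>, 0) * val0 (\<rho> + \<sigma>, 0) = 0"
      using s0 by (auto simp: val0_def)
    ultimately show ?thesis
      by (simp add: g_def das[OF dr] ev_single mval_add mval_single)
  qed
  ultimately show False using fk by (simp add: rh_sum[OF Eh] rh_mult[OF Eh])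
qed

lemma N_inj: "N \<sigma> = N \<tau> \<Longrightarrow> \<sigma> = \<tau>"
proof -
  assume "N \<sigma> = N \<tau>"
  then have "N (-\<tau> + \<sigma>) = N (-\<tau> + \<tau>)" by (rule N_cong)
  then have "N (-\<tau> + \<sigma>) = n" by (simp add: N_0)
  then have "-\<tau> + \<sigma> = 0" by (rule stab)
  then show "\<sigma> = \<tau>" by (metis add_minus_cancel add.right_neutral)
qed

lemma u_in': "\<rho> \<noteq> \<sigma> \<Longrightarrow> act \<sigma> u \<in> N \<rho>"
proof -
  assume "\<rho> \<noteq> \<sigma>"
  have "N (-\<sigma> + \<rho>) \<noteq> n"
  proof
    assume "N (-\<sigma> + \<rho>) = n"
    then have "-\<sigma> + \<rho> = 0" by (rule stab)
    then have "\<rho> = \<sigma>" by (metis add_minus_cancel add.right_neutral)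
    with \<open>\<rho> \<noteq> \<sigma>\<close> show False by simp
  qed
  then show ?thesis using u_in N_shift_iff by blast
qed

lemma ortho: "\<sigma> \<noteq> \<tau> \<Longrightarrow> act \<sigma> u * act \<tau> u = 0"
proof -
  assume st: "\<sigma> \<noteq> \<tau>"
  show ?thesis
  proof (rule N_inter)
    fix \<rho> show "act \<sigma> u * act \<tau> u \<in> N \<rho>"
    proof (cases "\<rho> = \<sigma>")
      case True then have "act \<tau> u \<in> N \<rho>" using st u_in' by simp
      then show ?thesis using N_ideal ideal_mult by blast
    next
      case False then have "act \<sigma> u \<in> N \<rho>" using u_in' by simp
      then show ?thesis using N_ideal ideal_mult2 by blast
    qed
  qed
qed

lemma sum1: "(\<Sum>\<sigma>\<in>UNIV. act \<sigma> u) = 1"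
proof -
  have "1 - (\<Sum>\<sigma>\<in>UNIV. act \<sigma> u) = 0"
  proof (rule N_inter)
    fix \<rho>
    have "(\<Sum>\<sigma>\<in>UNIV. act \<sigma> u) = act \<rho> u + (\<Sum>\<sigma>\<in>UNIV - {\<rho>}. act \<sigma> u)"
      by (subst sum.remove[of _ \<rho>]) auto
    moreover have "(\<Sum>\<sigma>\<in>UNIV - {\<rho>}. act \<sigma> u) \<in> N \<rho>"
      by (rule ideal_sum[OF N_ideal]) (use u_in' in auto)
    moreover have "act \<rho> (1 - u) \<in> N \<rho>" using N_shift[of "1 - u" 0 \<rho>] u_one N_0 by simp
    then have "1 - act \<rho> u \<in> N \<rho>" by (simp add: rh_diff[OF hom] rh_one[OF hom])
    ultimately show "1 - (\<Sum>\<sigma>\<in>UNIV. act \<sigma> u) \<in> N \<rho>"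
      using N_ideal ideal_diff by (metis diff_diff_eq)
  qed
  then show ?thesis by simp
qed

end


lemma const_hom: "ring_hom (\<lambda>c::'a::comm_ring_1. [:c:])"
  unfolding ring_hom_def by (simp add: one_pCons)

lemma dpolys_sum: "(\<And>x. x \<in> S \<Longrightarrow> g x \<in> dpolys n) \<Longrightarrow> sum g S \<in> dpolys n"
  by (induction S rule: infinite_finite_induct) (auto simp: dpolys_0 dpolys_add)

lemma dpolys_one: "1 \<in> dpolys n" unfolding dpolys_def by simp

lemma ev_zero_coeffs:
  assumes "\<And>m. z * Poly_Mapping.lookup p m = 0"
  shows "[:z:] * ev (\<lambda>c. [:c:]) val p = 0"
  unfolding ev_def sum_distrib_left
proof (rule sum.neutral, rule ballI)
  fix m
  have "[:z:] * ([:Poly_Mapping.lookup p m:] * mval val m) = [:z * Poly_Mapping.lookup p m:] * mval val m"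
    by (simp only: mult.assoc[symmetric] const_hom[THEN rh_mult, symmetric])
  then show "[:z:] * ([:Poly_Mapping.lookup p m:] * mval val m) = 0" by (simp add: assms)
qed

lemma root:
  fixes act :: "'s::{group_add,finite} \<Rightarrow> 'b::comm_ring_1 \<Rightarrow> 'b" and Q :: "'b poly"
  assumes dc: "difference_closed act" and ee: "e * e = e" and enz: "e \<noteq> 0"
    and orth: "\<And>\<rho>. \<rho> \<noteq> 0 \<Longrightarrow> e * act \<rho> e = 0"
    and monic: "lead_coeff Q = 1" and deg: "degree Q > 0"
  shows "\<exists>x. e * poly Q x = 0"
proof -
  have dr: "difference_ring act" using dc_pf[OF dc] by (rule pf_dr)
  define g :: "('s, 'b) dpoly" where
    "g = (\<Sum>j\<le>degree Q. Poly_Mapping.single (Poly_Mapping.single (0,0) j) (e * coeff Q j))"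
  have gd: "g \<in> dpolys 1" unfolding g_def
    by (rule dpolys_sum) (use keys_single_sub in \<open>fastforce simp: dpolys_def\<close>)
  have evg: "dpoly_eval act x g = e * poly Q (x 0)" for x
    by (simp add: dpoly_eval_ev g_def ev_sum[OF rh_id] ev_single mval_single dr_0[OF dr]
                  poly_altdef sum_distrib_left mult.assoc)
  have ge: "Poly_Mapping.lookup g k = e * Poly_Mapping.lookup g k" for k
    unfolding g_def lookup_sum lookup_single sum_distrib_left
    by (rule sum.cong) (simp_all add: when_def mult.assoc[symmetric] ee)
  define valU :: "'s \<times> nat \<Rightarrow> 'b poly" where "valU v = (if v = (0,0) then [:0,1:] else 0)" for v
  let ?U = "ev (\<lambda>c. [:c:]) valU"
  have Uh: "ring_hom ?U" by (rule ev_ring_hom[OF const_hom])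
  have Ug: "?U g = [:e:] * Q"
  proof -
    have "?U g = (\<Sum>j\<le>degree Q. [:e * coeff Q j:] * [:0,1:] ^ j)"
      by (simp add: g_def ev_sum[OF const_hom] ev_single mval_single valU_def)
    also have "\<dots> = (\<Sum>j\<le>degree Q. [:e:] * monom (coeff Q j) j)"
      by (rule sum.cong) (simp_all add: monom_altdef mult.commute)
    also have "\<dots> = [:e:] * Q" by (subst (2) poly_as_sum_of_monoms[symmetric]) (simp add: sum_distrib_left)
    finally show ?thesis .
  qed
  have Uact: "[:e:] * ?U (dpoly_act act \<rho> g) = 0" if "\<rho> \<noteq> 0" for \<rho>
  proof (rule ev_zero_coeffs)
    fix k
    have "e * Poly_Mapping.lookup (dpoly_act act \<rho> g) k = e * act \<rho> (e * Poly_Mapping.lookup g (mon_shift (-\<rho>) k))"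
      by (simp add: dal[OF dr] ge[symmetric])
    also have "\<dots> = (e * act \<rho> e) * act \<rho> (Poly_Mapping.lookup g (mon_shift (-\<rho>) k))"
      by (simp add: rh_mult[OF dr_hom[OF dr]] mult.assoc)
    also have "\<dots> = 0" using orth[OF that] by simp
    finally show "e * Poly_Mapping.lookup (dpoly_act act \<rho> g) k = 0" .
  qed
  have "\<exists>x. \<forall>g'\<in>genI act g. dpoly_eval act x g' = 0"
  proof (rule ccontr)
    assume nx: "\<not> ?thesis"
    have "1 \<in> radical_in (dpolys 1) (genI act g)"
      using dc_use[OF dc gd] dpolys_one nx by blast
    then obtain k where "1 ^ k \<in> genI act g" unfolding radical_in_def by blast
    then obtain h where h1: "1 = (\<Sum>\<rho>\<in>UNIV. h \<rho> * dpoly_act act \<rho> g)" unfolding genI_def by auto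
    have "[:e:] = [:e:] * ?U 1" by (simp add: rh_one[OF Uh])
    also have "\<dots> = (\<Sum>\<rho>\<in>UNIV. ?U (h \<rho>) * ([:e:] * ?U (dpoly_act act \<rho> g)))"
      by (subst h1) (simp add: rh_sum[OF Uh] rh_mult[OF Uh] sum_distrib_left algebra_simps)
    also have "\<dots> = ?U (h 0) * ([:e:] * ?U (dpoly_act act 0 g))"
    proof -
      have "(\<Sum>\<rho>\<in>UNIV. ?U (h \<rho>) * ([:e:] * ?U (dpoly_act act \<rho> g))) =
          ?U (h 0) * ([:e:] * ?U (dpoly_act act 0 g)) + (\<Sum>\<rho>\<in>UNIV-{0}. ?U (h \<rho>) * ([:e:] * ?U (dpoly_act act \<rho> g)))"
        by (subst sum.remove[of _ 0]) auto
      also have "(\<Sum>\<rho>\<in>UNIV-{0}. ?U (h \<rho>) * ([:e:] * ?U (dpoly_act act \<rho> g))) = 0"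
      proof (rule sum.neutral, rule ballI)
        fix \<rho> :: 's assume "\<rho> \<in> UNIV - {0}"
        then have "[:e:] * ?U (dpoly_act act \<rho> g) = 0" by (intro Uact) auto
        then show "?U (h \<rho>) * ([:e:] * ?U (dpoly_act act \<rho> g)) = 0" by (metis mult_zero_right)
      qed
      finally show ?thesis by simp
    qed
    also have "\<dots> = (?U (h 0) * [:e:]) * Q"
      by (simp add: dpoly_act_0[OF dr] Ug mult.assoc[symmetric] const_hom[THEN rh_mult, symmetric] ee)
    finally have eq: "[:e:] = (?U (h 0) * [:e:]) * Q" .
    define q where "q = ?U (h 0) * [:e:]"
    have eq2: "[:e:] = q * Q" unfolding q_def by (rule eq)
    show False
    proof (cases "q = 0")
      case True then show False using eq enz q_def by simp
    next
      case False
      have "coeff (q * Q) (degree q + degree Q) = lead_coeff q"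
        by (simp add: coeff_mult_degree_sum monic)
      also have "\<dots> \<noteq> 0" using False by simp
      finally have "coeff [:e:] (degree q + degree Q) \<noteq> 0" by (subst eq2)
      moreover have "degree q + degree Q > 0" using deg by simp
      ultimately show False by (cases "degree q + degree Q") (simp_all add: coeff_pCons)
    qed
  qed
  then obtain x where "\<forall>g'\<in>genI act g. dpoly_eval act x g' = 0" by blast
  then have "dpoly_eval act x g = 0" using genI_gen[OF dr gd] by blast
  then show ?thesis using evg by metis
qed


lemma dh_hom: "difference_hom actA actB \<iota> \<Longrightarrow> ring_hom \<iota>" unfolding difference_hom_def by blast
lemma dh_comm: "difference_hom actA actB \<iota> \<Longrightarrow> \<iota> (actA \<sigma> a) = actB \<sigma> (\<iota> a)" unfolding difference_hom_def by blast

lemma exists_e0: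
  fixes actA :: "'s::{group_add,finite} \<Rightarrow> 'a::comm_ring_1 \<Rightarrow> 'a"
    and actB :: "'s \<Rightarrow> 'b::comm_ring_1 \<Rightarrow> 'b" and \<iota> :: "'a \<Rightarrow> 'b"
  assumes pfA: "pseudofield actA" and M: "maximal_ideal M" and dc: "difference_closed actB"
    and dh: "difference_hom actA actB \<iota>"
  shows "\<exists>e. e * e = e \<and> e \<noteq> 0 \<and> (\<forall>\<sigma> \<tau>. \<sigma> \<noteq> \<tau> \<longrightarrow> actB \<sigma> e * actB \<tau> e = 0) \<and>
     (\<Sum>\<sigma>\<in>UNIV. actB \<sigma> e) = 1 \<and> (\<forall>b. e * b \<noteq> 0 \<longrightarrow> (\<exists>c. e * b * c = e)) \<and>
     (\<forall>a. e * \<iota> a = 0 \<longleftrightarrow> a \<in> M)"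
proof -
  have pfB: "pseudofield actB" by (rule dc_pf[OF dc])
  have drA: "difference_ring actA" by (rule pf_dr[OF pfA])
  have drB: "difference_ring actB" by (rule pf_dr[OF pfB])
  have hA: "ring_hom (actA \<sigma>)" for \<sigma> by (rule dr_hom[OF drA])
  have hB: "ring_hom (actB \<sigma>)" for \<sigma> by (rule dr_hom[OF drB])
  have hi: "ring_hom \<iota>" by (rule dh_hom[OF dh])
  have MI: "is_ideal M" by (rule maximal_ideal_is[OF M])
  obtain n :: "'b set" where n: "maximal_ideal n" using maximal_exists[OF pf_01[OF pfB]] by blast
  interpret bsc actB n by unfold_locales (use pfB n dc in auto)
  have uprod: "u * x \<noteq> 0 \<Longrightarrow> u * y \<noteq> 0 \<Longrightarrow> u * (x * y) \<noteq> 0" for x y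
  proof
    assume x: "u * x \<noteq> 0" and y: "u * y \<noteq> 0" and xy: "u * (x * y) = 0"
    obtain c where c: "u * x * c = u" using u_field[OF x] by blast
    have "u * y = (u * x * c) * y" using c by simp
    also have "\<dots> = c * (u * (x * y))" by (simp add: algebra_simps)
    finally show False using xy y by simp
  qed
  have "\<exists>\<sigma>0. \<forall>a. actA (-\<sigma>0) a \<in> M \<longrightarrow> u * \<iota> a = 0"
  proof (rule ccontr)
    assume "\<not> ?thesis"
    then have "\<forall>\<sigma>. \<exists>m. actA (-\<sigma>) m \<in> M \<and> u * \<iota> m \<noteq> 0" by blast
    then obtain m where m: "\<And>\<sigma>. actA (-\<sigma>) (m \<sigma>) \<in> M" "\<And>\<sigma>. u * \<iota> (m \<sigma>) \<noteq> 0" by metis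
    let ?P = "\<Prod>\<sigma>\<in>UNIV. m \<sigma>"
    have "\<And>S::'s set. u * (\<Prod>\<sigma>\<in>S. \<iota> (m \<sigma>)) \<noteq> 0"
    proof -
      fix S :: "'s set"
      show "u * (\<Prod>\<sigma>\<in>S. \<iota> (m \<sigma>)) \<noteq> 0" using finite[of S]
      proof (induction S rule: finite_induct)
        case empty then show ?case using u_nz by simp
      next
        case (insert x F) then show ?case using uprod[OF m(2)[of x]] by simp
      qed
    qed
    then have Pnz: "u * \<iota> ?P \<noteq> 0" by (simp add: rh_prod[OF hi])
    let ?Z = "{a. \<forall>\<tau>. actA (-\<tau>) a \<in> M}"
    have "is_ideal ?Z" unfolding is_ideal_def using MI
      by (auto simp: rh0[OF hA] rh_add[OF hA] rh_mult[OF hA] ideal_0 ideal_add ideal_mult)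
    moreover have "stable actA ?Z" unfolding stable_def
    proof (intro allI ballI)
      fix \<sigma> a assume "a \<in> ?Z"
      have "actA (-\<tau>) (actA \<sigma> a) = actA (-(-\<sigma> + \<tau>)) a" for \<tau>
        by (simp add: dr_comp[OF drA, symmetric] minus_add)
      then show "actA \<sigma> a \<in> ?Z" using \<open>a \<in> ?Z\<close> by simp
    qed
    moreover have "1 \<notin> ?Z" using maximal_one[OF M] by (auto simp: rh_one[OF hA])
    ultimately have Z0: "?Z = {0}" using pf_simple[OF pfA] by blast
    have "?P \<in> ?Z"
    proof (intro CollectI allI)
      fix \<tau>
      have "actA (-\<tau>) ?P = actA (-\<tau>) (m \<tau>) * (\<Prod>\<sigma>\<in>UNIV-{\<tau>}. actA (-\<tau>) (m \<sigma>))"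
        by (simp add: prod.remove[of UNIV \<tau>] rh_mult[OF hA] rh_prod[OF hA])
      then show "actA (-\<tau>) ?P \<in> M" using m(1) MI ideal_mult2 by metis
    qed
    with Z0 have "?P = 0" by blast
    with Pnz show False by (simp add: rh0[OF hi])
  qed
  then obtain \<sigma>0 where s0: "\<And>a. actA (-\<sigma>0) a \<in> M \<Longrightarrow> u * \<iota> a = 0" by blast
  have K0: "u * \<iota> a = 0 \<longleftrightarrow> actA (-\<sigma>0) a \<in> M" for a
  proof
    assume ua: "u * \<iota> a = 0"
    show "actA (-\<sigma>0) a \<in> M"
    proof (rule ccontr)
      assume "actA (-\<sigma>0) a \<notin> M"
      then obtain r where r: "1 - r * actA (-\<sigma>0) a \<in> M" using maximal_inv[OF M] by blast
      have "actA (-\<sigma>0) (1 - actA \<sigma>0 r * a) = 1 - r * actA (-\<sigma>0) a"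
        by (simp add: rh_diff[OF hA] rh_one[OF hA] rh_mult[OF hA] dr_inv1[OF drA])
      then have "u * \<iota> (1 - actA \<sigma>0 r * a) = 0" using s0 r by simp
      then have "u - \<iota> (actA \<sigma>0 r) * (u * \<iota> a) = 0"
        by (simp add: rh_diff[OF hi] rh_one[OF hi] rh_mult[OF hi] algebra_simps)
      then show False using ua u_nz by simp
    qed
  qed (rule s0)
  define e where "e = actB (-\<sigma>0) u"
  have "e * e = e" unfolding e_def by (simp add: rh_mult[OF hB, symmetric] u_idem)
  moreover have "e \<noteq> 0" unfolding e_def using u_nz dr_inj[OF drB, of "-\<sigma>0" u 0] by (auto simp: rh0[OF hB])
  moreover have "\<forall>\<sigma> \<tau>. \<sigma> \<noteq> \<tau> \<longrightarrow> actB \<sigma> e * actB \<tau> e = 0"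
  proof (intro allI impI)
    fix \<sigma> \<tau> :: 's assume "\<sigma> \<noteq> \<tau>"
    then have "\<sigma> + -\<sigma>0 \<noteq> \<tau> + -\<sigma>0" by (metis add.right_cancel)
    then show "actB \<sigma> e * actB \<tau> e = 0" unfolding e_def using ortho by (simp add: dr_comp[OF drB, symmetric])
  qed
  moreover have "(\<Sum>\<sigma>\<in>UNIV. actB \<sigma> e) = 1"
  proof -
    have "(\<Sum>\<sigma>\<in>UNIV. actB \<sigma> e) = (\<Sum>\<sigma>\<in>UNIV. actB (\<sigma> + -\<sigma>0) u)"
      unfolding e_def by (simp add: dr_comp[OF drB, symmetric])
    also have "\<dots> = (\<Sum>\<sigma>\<in>UNIV. actB \<sigma> u)"
      by (rule sum.reindex_bij_witness[where i="\<lambda>\<sigma>. \<sigma> + \<sigma>0" and j="\<lambda>\<sigma>. \<sigma> + -\<sigma>0"])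
         (simp_all add: add.assoc)
    finally show ?thesis using sum1 by simp
  qed
  moreover have "\<forall>b. e * b \<noteq> 0 \<longrightarrow> (\<exists>c. e * b * c = e)"
  proof (intro allI impI)
    fix b assume eb: "e * b \<noteq> 0"
    have "actB \<sigma>0 (e * b) = u * actB \<sigma>0 b" unfolding e_def by (simp add: rh_mult[OF hB] dr_inv2[OF drB])
    moreover have "actB \<sigma>0 (e * b) \<noteq> 0" using eb dr_inj[OF drB, of \<sigma>0 "e*b" 0] by (auto simp: rh0[OF hB])
    ultimately obtain c where c: "u * actB \<sigma>0 b * c = u" using u_field by auto
    have "actB (-\<sigma>0) (u * actB \<sigma>0 b * c) = e * b * actB (-\<sigma>0) c"
      unfolding e_def by (simp add: rh_mult[OF hB] dr_inv1[OF drB])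
    with c have "e * b * actB (-\<sigma>0) c = e" unfolding e_def by simp
    then show "\<exists>c. e * b * c = e" by blast
  qed
  moreover have "\<forall>a. e * \<iota> a = 0 \<longleftrightarrow> a \<in> M"
  proof
    fix a
    have "e * \<iota> a = actB (-\<sigma>0) (u * \<iota> (actA \<sigma>0 a))"
      unfolding e_def by (simp add: rh_mult[OF hB] dh_comm[OF dh] dr_inv1[OF drB])
    then have "e * \<iota> a = 0 \<longleftrightarrow> u * \<iota> (actA \<sigma>0 a) = 0"
      using dr_inj[OF drB, of "-\<sigma>0" _ 0] by (auto simp: rh0[OF hB])
    also have "\<dots> \<longleftrightarrow> a \<in> M" by (simp add: K0 dr_inv1[OF drA])
    finally show "e * \<iota> a = 0 \<longleftrightarrow> a \<in> M" .
  qed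
  ultimately show ?thesis by blast
qed


definition subfield :: "'l::field set \<Rightarrow> bool" where
  "subfield F \<longleftrightarrow> 0 \<in> F \<and> 1 \<in> F \<and> (\<forall>x\<in>F. \<forall>y\<in>F. x + y \<in> F \<and> x * y \<in> F) \<and> (\<forall>x\<in>F. - x \<in> F \<and> inverse x \<in> F)"

definition PF :: "'l::field set \<Rightarrow> 'l poly set" where "PF F = {p. \<forall>i. coeff p i \<in> F}"

context fixes F :: "'l::field set" assumes sf: "subfield F"
begin
lemma sf0: "0 \<in> F" using sf unfolding subfield_def by blast
lemma sf1: "1 \<in> F" using sf unfolding subfield_def by blast
lemma sfadd: "x \<in> F \<Longrightarrow> y \<in> F \<Longrightarrow> x + y \<in> F" using sf unfolding subfield_def by blast
lemma sfmult: "x \<in> F \<Longrightarrow> y \<in> F \<Longrightarrow> x * y \<in> F" using sf unfolding subfield_def by blast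
lemma sfneg: "x \<in> F \<Longrightarrow> - x \<in> F" using sf unfolding subfield_def by blast
lemma sfinv: "x \<in> F \<Longrightarrow> inverse x \<in> F" using sf unfolding subfield_def by blast
lemma sfdiff: "x \<in> F \<Longrightarrow> y \<in> F \<Longrightarrow> x - y \<in> F" using sfadd sfneg by (metis diff_conv_add_uminus)
lemma sfdiv: "x \<in> F \<Longrightarrow> y \<in> F \<Longrightarrow> x / y \<in> F" using sfmult sfinv by (metis divide_inverse)
lemma sfsum: "(\<And>i. i \<in> S \<Longrightarrow> g i \<in> F) \<Longrightarrow> sum g S \<in> F"
  by (induction S rule: infinite_finite_induct) (auto simp: sf0 sfadd)

lemma PF_coeff: "p \<in> PF F \<Longrightarrow> coeff p i \<in> F" unfolding PF_def by blast
lemma PF_add: "p \<in> PF F \<Longrightarrow> q \<in> PF F \<Longrightarrow> p + q \<in> PF F" unfolding PF_def by (simp add: sfadd)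
lemma PF_diff: "p \<in> PF F \<Longrightarrow> q \<in> PF F \<Longrightarrow> p - q \<in> PF F" unfolding PF_def by (simp add: sfdiff)
lemma PF_neg: "p \<in> PF F \<Longrightarrow> - p \<in> PF F" unfolding PF_def by (simp add: sfneg)
lemma PF_mult: "p \<in> PF F \<Longrightarrow> q \<in> PF F \<Longrightarrow> p * q \<in> PF F" unfolding PF_def by (simp add: coeff_mult sfsum sfmult)
lemma PF_smult: "c \<in> F \<Longrightarrow> p \<in> PF F \<Longrightarrow> smult c p \<in> PF F" unfolding PF_def by (simp add: sfmult)
lemma PF_monom: "c \<in> F \<Longrightarrow> monom c k \<in> PF F" unfolding PF_def by (simp add: coeff_monom sf0)
lemma PF_const: "c \<in> F \<Longrightarrow> [:c:] \<in> PF F" unfolding PF_def by (simp add: coeff_pCons sf0 split: nat.split)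
lemma PF_0: "0 \<in> PF F" unfolding PF_def by (simp add: sf0)
lemma PF_1: "1 \<in> PF F" using PF_const[OF sf1] by (simp add: one_pCons)
lemma PF_X: "[:0,1:] \<in> PF F" unfolding PF_def by (simp add: coeff_pCons sf0 sf1 split: nat.split)
end

lemma cancel_lead:
  fixes p s :: "'l::field poly"
  assumes "s \<noteq> 0" "degree s \<le> degree p"
  defines "p' \<equiv> p - smult (lead_coeff p / lead_coeff s) (monom 1 (degree p - degree s) * s)"
  shows "p' = 0 \<or> degree p' < degree p"
proof -
  let ?k = "degree p - degree s"
  have dm: "degree (monom 1 ?k * s) = degree p"
    using assms by (simp add: degree_mult_eq degree_monom_eq)
  have lm: "lead_coeff (monom 1 ?k * s) = lead_coeff s"
    by (simp add: lead_coeff_mult degree_monom_eq lead_coeff_monom)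
  have "degree p' \<le> degree p" unfolding p'_def
    using degree_smult_le[of _ "monom 1 ?k * s"] dm by (intro degree_diff_le) auto
  moreover have "coeff p' (degree p) = 0"
    unfolding p'_def using lm dm assms(1) by simp
  ultimately show ?thesis by (metis le_neq_implies_less leading_coeff_0_iff)
qed


lemma PF_lead: "p \<in> PF F \<Longrightarrow> lead_coeff p \<in> F" unfolding PF_def by blast

lemma PF_red:
  assumes sf: "subfield F" and "p \<in> PF F" "s \<in> PF F"
  shows "p - smult (lead_coeff p / lead_coeff s) (monom 1 k * s) \<in> PF F"
  using assms by (intro PF_diff PF_smult PF_mult PF_monom sfdiv PF_lead sf1) auto

lemma PF_div:
  assumes sf: "subfield F" and s: "s \<in> PF F" "s \<noteq> 0"
  shows "p \<in> PF F \<Longrightarrow> \<exists>t r. t \<in> PF F \<and> r \<in> PF F \<and> p = s * t + r \<and> (r = 0 \<or> degree r < degree s)"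
proof (induction "degree p" arbitrary: p rule: less_induct)
  case less
  show ?case
  proof (cases "p = 0 \<or> degree p < degree s")
    case True
    then show ?thesis using less.prems PF_0[OF sf] by (intro exI[of _ 0] exI[of _ p]) auto
  next
    case False
    let ?c = "lead_coeff p / lead_coeff s" and ?k = "degree p - degree s"
    define p' where "p' = p - smult ?c (monom 1 ?k * s)"
    have p'F: "p' \<in> PF F" unfolding p'_def by (rule PF_red[OF sf less.prems s(1)])
    have mF: "smult ?c (monom 1 ?k) \<in> PF F"
      using sf less.prems s by (intro PF_smult PF_monom sfdiv PF_lead sf1) auto
    have eq: "p = p' + s * smult ?c (monom 1 ?k)" unfolding p'_def by (simp add: algebra_simps)
    from cancel_lead[OF s(2), of p] False have "p' = 0 \<or> degree p' < degree p" unfolding p'_def by simp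
    then show ?thesis
    proof
      assume "p' = 0"
      then show ?thesis using eq mF PF_0[OF sf] by (intro exI[of _ "smult ?c (monom 1 ?k)"] exI[of _ 0]) auto
    next
      assume "degree p' < degree p"
      from less.hyps[OF this p'F] obtain t r where tr: "t \<in> PF F" "r \<in> PF F" "p' = s * t + r" "r = 0 \<or> degree r < degree s"
        by blast
      have "p = s * (t + smult ?c (monom 1 ?k)) + r" using eq tr(3) by (simp add: algebra_simps)
      then show ?thesis using tr PF_add[OF sf tr(1) mF] by blast
    qed
  qed
qed


locale minp =
  fixes F :: "'l::field set" and y :: 'l and q :: "'l poly"
  assumes sf: "subfield F" and qF: "q \<in> PF F" and qmon: "lead_coeff q = 1" and qy: "poly q y = 0"
    and qdeg: "degree q > 0" and qmin: "\<And>p. p \<in> PF F \<Longrightarrow> p \<noteq> 0 \<Longrightarrow> poly p y = 0 \<Longrightarrow> degree q \<le> degree p"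
begin

lemma q_nz: "q \<noteq> 0" using qmon by auto

lemma red_q:
  assumes "p \<in> PF F" "degree q \<le> degree p"
  defines "p' \<equiv> p - smult (lead_coeff p) (monom 1 (degree p - degree q) * q)"
  shows "p' \<in> PF F" "poly p' y = poly p y" "p' = 0 \<or> degree p' < degree p"
proof -
  show "p' \<in> PF F" using PF_red[OF sf assms(1) qF] qmon unfolding p'_def by simp
  show "poly p' y = poly p y" unfolding p'_def by (simp add: qy)
  show "p' = 0 \<or> degree p' < degree p" using cancel_lead[OF q_nz assms(2)] qmon unfolding p'_def by simp
qed

lemma bezout: "p \<in> PF F \<Longrightarrow> poly p y \<noteq> 0 \<Longrightarrow> \<exists>b\<in>PF F. poly b y * poly p y = 1"
proof (induction "degree p" arbitrary: p rule: less_induct)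
  case less
  show ?case
  proof (cases "degree p = 0")
    case True
    then obtain c where c: "p = [:c:]" by (metis degree_eq_zeroE)
    have cF: "c \<in> F" using less.prems(1) c PF_coeff[OF sf less.prems(1), of 0] by simp
    have "c \<noteq> 0" using less.prems(2) c by simp
    then show ?thesis using c PF_const[OF sf sfinv[OF sf cF]] by (intro bexI[of _ "[:inverse c:]"]) auto
  next
    case False
    show ?thesis
    proof (cases "degree q \<le> degree p")
      case True
      define p' where "p' = p - smult (lead_coeff p) (monom 1 (degree p - degree q) * q)"
      have r: "p' \<in> PF F" "poly p' y = poly p y" "p' = 0 \<or> degree p' < degree p"
        using red_q[OF less.prems(1) True] unfolding p'_def by blast+
      have "p' \<noteq> 0" using r(2) less.prems(2) by auto
      with r(3) have "degree p' < degree p" by simp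
      from less.hyps[OF this r(1)] r(2) less.prems(2) show ?thesis by simp
    next
      case dlt: False
      have pnz: "p \<noteq> 0" using less.prems(2) by auto
      obtain t r where tr: "t \<in> PF F" "r \<in> PF F" "q = p * t + r" "r = 0 \<or> degree r < degree p"
        using PF_div[OF sf less.prems(1) pnz qF] by blast
      have tnz: "t \<noteq> 0"
      proof
        assume "t = 0"
        then have "q = r" using tr by simp
        then show False using tr(4) dlt q_nz by auto
      qed
      have "degree (p * t) = degree p + degree t" using pnz tnz by (rule degree_mult_eq)
      moreover have "degree q = degree (p * t)"
      proof -
        have "degree r < degree (p * t)" using tr(4) calculation False by auto
        then show ?thesis using tr(3) by (simp add: degree_add_eq_left)
      qed
      ultimately have "degree t < degree q" using False by simp
      then have tny: "poly t y \<noteq> 0" using qmin[OF tr(1) tnz] by fastforce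
      have ry: "poly r y = - (poly p y * poly t y)" using tr(3) qy by (simp add: eq_neg_iff_add_eq_0 add.commute)
      then have "poly r y \<noteq> 0" using tny less.prems(2) by simp
      then have rnz: "r \<noteq> 0" by auto
      with tr(4) have "degree r < degree p" by simp
      from less.hyps[OF this tr(2) \<open>poly r y \<noteq> 0\<close>] obtain b where b: "b \<in> PF F" "poly b y * poly r y = 1" by blast
      have "poly (- (b * t)) y * poly p y = 1" using b(2) ry by (simp add: algebra_simps)
      moreover have "- (b * t) \<in> PF F" using PF_neg[OF sf PF_mult[OF sf b(1) tr(1)]] .
      ultimately show ?thesis by blast
    qed
  qed
qed

end

lemma minp_exists:
  assumes sf: "subfield F" and alg: "p0 \<in> PF F" "p0 \<noteq> 0" "poly p0 y = 0"
  shows "\<exists>q. minp F y q"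
proof -
  define d where "d = (LEAST d. \<exists>p\<in>PF F. p \<noteq> 0 \<and> poly p y = 0 \<and> degree p = d)"
  have ex: "\<exists>p\<in>PF F. p \<noteq> 0 \<and> poly p y = 0 \<and> degree p = d"
    unfolding d_def by (rule LeastI[of _ "degree p0"]) (use alg in blast)
  have dmin: "\<And>p. p \<in> PF F \<Longrightarrow> p \<noteq> 0 \<Longrightarrow> poly p y = 0 \<Longrightarrow> d \<le> degree p"
    unfolding d_def by (rule Least_le) blast
  obtain q0 where q0: "q0 \<in> PF F" "q0 \<noteq> 0" "poly q0 y = 0" "degree q0 = d" using ex by blast
  define q where "q = smult (inverse (lead_coeff q0)) q0"
  have "minp F y q"
  proof
    show "subfield F" by (rule sf)
    show "q \<in> PF F" unfolding q_def by (rule PF_smult[OF sf sfinv[OF sf PF_lead[OF q0(1)]] q0(1)])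
    show "lead_coeff q = 1" unfolding q_def using q0(2) by simp
    show "poly q y = 0" unfolding q_def using q0(3) by simp
    have "lead_coeff q0 \<noteq> 0" using q0(2) by simp
    then have dq: "degree q = d" unfolding q_def using q0(4) by (simp del: leading_coeff_0_iff)
    show "degree q > 0"
    proof (rule ccontr)
      assume "\<not> degree q > 0"
      then have "degree q0 = 0" using dq q0(4) by simp
      then obtain c where "q0 = [:c:]" by (metis degree_eq_zeroE)
      then show False using q0(2,3) by simp
    qed
    show "\<And>p. p \<in> PF F \<Longrightarrow> p \<noteq> 0 \<Longrightarrow> poly p y = 0 \<Longrightarrow> degree q \<le> degree p"
      using dmin dq by simp
  qed
  then show ?thesis by blast
qed


locale zc =
  fixes \<phi> :: "'a::comm_ring_1 \<Rightarrow> 'l::field" and \<iota> :: "'a \<Rightarrow> 'b::comm_ring_1" and e :: 'b and M :: "'a set"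
  assumes phi: "ring_hom \<phi>" and ker: "{a. \<phi> a = 0} = M"
    and alg: "\<And>y. \<exists>p. p \<noteq> 0 \<and> (\<forall>i. coeff p i \<in> range \<phi>) \<and> poly p y = 0"
    and Mmax: "maximal_ideal M" and ee: "e * e = e"
    and iker: "\<And>a. e * \<iota> a = 0 \<longleftrightarrow> a \<in> M" and ih: "ring_hom \<iota>"
    and root: "\<And>Q::'b poly. lead_coeff Q = 1 \<Longrightarrow> degree Q > 0 \<Longrightarrow> \<exists>x. e * poly Q x = 0"
begin

definition ph :: "'l set \<Rightarrow> ('l \<Rightarrow> 'b) \<Rightarrow> bool" where
  "ph F \<kappa> \<longleftrightarrow> subfield F \<and> range \<phi> \<subseteq> F \<and> (\<forall>x\<in>F. \<forall>z\<in>F. \<kappa> (x + z) = \<kappa> x + \<kappa> z \<and> \<kappa> (x * z) = \<kappa> x * \<kappa> z)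
     \<and> \<kappa> 1 = e \<and> (\<forall>x\<in>F. e * \<kappa> x = \<kappa> x) \<and> (\<forall>a. \<kappa> (\<phi> a) = e * \<iota> a)"

context fixes F \<kappa> assumes ph: "ph F \<kappa>"
begin
lemma ph_sf: "subfield F" using ph unfolding ph_def by blast
lemma ph_range: "\<phi> a \<in> F" using ph unfolding ph_def by blast
lemma ph_add: "x \<in> F \<Longrightarrow> z \<in> F \<Longrightarrow> \<kappa> (x + z) = \<kappa> x + \<kappa> z" using ph unfolding ph_def by blast
lemma ph_mult: "x \<in> F \<Longrightarrow> z \<in> F \<Longrightarrow> \<kappa> (x * z) = \<kappa> x * \<kappa> z" using ph unfolding ph_def by blast
lemma ph_one: "\<kappa> 1 = e" using ph unfolding ph_def by blast
lemma ph_e: "x \<in> F \<Longrightarrow> e * \<kappa> x = \<kappa> x" using ph unfolding ph_def by blast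
lemma ph_phi: "\<kappa> (\<phi> a) = e * \<iota> a" using ph unfolding ph_def by blast
lemma ph_0: "\<kappa> 0 = 0"
  using ph_add[OF sf0[OF ph_sf] sf0[OF ph_sf]] by simp
lemma ph_sum: "(\<And>i. i \<in> S \<Longrightarrow> g i \<in> F) \<Longrightarrow> \<kappa> (sum g S) = (\<Sum>i\<in>S. \<kappa> (g i))"
proof (induction S rule: infinite_finite_induct)
  case (insert x S)
  have "\<kappa> (g x + sum g S) = \<kappa> (g x) + \<kappa> (sum g S)"
    by (rule ph_add) (use insert in auto, rule sfsum[OF ph_sf], use insert in auto)
  then show ?case using insert by simp
qed (simp_all add: ph_0)

lemma coeff_Kp: "coeff (map_poly \<kappa> p) i = \<kappa> (coeff p i)"
  by (rule coeff_map_poly[where f=\<kappa>, OF ph_0])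

lemma Kp_add: "p \<in> PF F \<Longrightarrow> s \<in> PF F \<Longrightarrow> map_poly \<kappa> (p + s) = map_poly \<kappa> p + map_poly \<kappa> s"
  by (rule poly_eqI) (simp add: coeff_Kp ph_add PF_coeff[OF ph_sf])

lemma Kp_mult: "p \<in> PF F \<Longrightarrow> s \<in> PF F \<Longrightarrow> map_poly \<kappa> (p * s) = map_poly \<kappa> p * map_poly \<kappa> s"
  by (rule poly_eqI)
     (simp add: coeff_Kp coeff_mult ph_sum ph_mult PF_coeff[OF ph_sf] sfmult[OF ph_sf])

lemma Kp_const: "map_poly \<kappa> [:c:] = [:\<kappa> c:]"
  by (rule poly_eqI) (simp add: coeff_Kp coeff_pCons ph_0 split: nat.split)

lemma Kp_monom: "map_poly \<kappa> (monom c k) = monom (\<kappa> c) k"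
  by (rule poly_eqI) (simp add: coeff_Kp coeff_monom ph_0)

lemma Kp_e: "p \<in> PF F \<Longrightarrow> e * coeff (map_poly \<kappa> p) i = coeff (map_poly \<kappa> p) i"
  by (simp add: coeff_Kp ph_e PF_coeff[OF ph_sf])

end

lemma smult_cm: "smult a p = [:a:] * p" by simp

lemma poly_e:
  assumes "\<And>i. e * coeff P i = coeff P i"
  shows "e * poly P x = poly P x" "poly P (e * x) = poly P x"
proof -
  show "e * poly P x = poly P x"
    unfolding poly_altdef sum_distrib_left by (rule sum.cong) (simp_all add: mult.assoc[symmetric] assms)
  have pe: "e ^ Suc k = e" for k by (induction k) (simp_all add: ee)
  have "coeff P i * (e * x) ^ i = coeff P i * x ^ i" for i
  proof (cases i)
    case (Suc k)
    have "(e * x) ^ i = e * x ^ i" by (simp only: power_mult_distrib Suc pe)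
    then have "coeff P i * (e * x) ^ i = (e * coeff P i) * x ^ i" by (simp add: ac_simps)
    then show ?thesis by (simp add: assms)
  qed simp
  then show "poly P (e * x) = poly P x" unfolding poly_altdef by simp
qed


lemma ext:
  fixes F :: "'l set" and y :: 'l and \<kappa> :: "'l \<Rightarrow> 'b"
  assumes ph: "ph F \<kappa>" and yF: "y \<notin> F"
  shows "\<exists>F' \<kappa>'. ph F' \<kappa>' \<and> F \<subseteq> F' \<and> y \<in> F' \<and> (\<forall>x\<in>F. \<kappa>' x = \<kappa> x)"
proof -
  have sf: "subfield F" by (rule ph_sf[OF ph])
  obtain p0 where p0: "p0 \<noteq> 0" "\<forall>i. coeff p0 i \<in> range \<phi>" "poly p0 y = 0" using alg by blast
  have "coeff p0 i \<in> F" for i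
  proof -
    obtain a where "coeff p0 i = \<phi> a" using p0(2) by blast
    then show ?thesis using ph_range[OF ph] by simp
  qed
  then have "p0 \<in> PF F" unfolding PF_def by blast
  then obtain q where "minp F y q" using minp_exists[OF sf _ p0(1,3)] by blast
  then interpret minp F y q .
  let ?K = "map_poly \<kappa>"
  let ?d = "degree q"
  define Q where "Q = ?K q + monom (1 - e) ?d"
  have cQ: "coeff Q i = \<kappa> (coeff q i) + (if i = ?d then 1 - e else 0)" for i
    by (simp add: Q_def coeff_Kp[OF ph] coeff_monom)
  have Qd: "coeff Q ?d = 1" using cQ[of ?d] qmon ph_one[OF ph] by simp
  have Qgt: "coeff Q i = 0" if "i > ?d" for i
    using cQ[of i] that coeff_eq_0[OF that] ph_0[OF ph] by simp
  have degQ: "degree Q = ?d"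
    using Qd Qgt by (intro antisym degree_le le_degree) auto
  then obtain x where x: "e * poly Q x = 0" using root[of Q] Qd qdeg by auto
  define r where "r = e * x"
  have Ke: "\<And>p i. p \<in> PF F \<Longrightarrow> e * coeff (?K p) i = coeff (?K p) i" by (rule Kp_e[OF ph])
  have qr: "poly (?K q) r = 0"
  proof -
    have "poly (?K q) r = e * poly (?K q) x" unfolding r_def using poly_e[OF Ke[OF qF]] by simp
    also have "\<dots> = e * poly Q x - e * ((1 - e) * x ^ ?d)" by (simp add: Q_def poly_monom algebra_simps)
    also have "\<dots> = 0" using x by (simp add: mult.assoc[symmetric] right_diff_distrib ee)
    finally show ?thesis .
  qed
  have wd: "p \<in> PF F \<Longrightarrow> poly p y = 0 \<Longrightarrow> poly (?K p) r = 0" for p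
  proof (induction "degree p" arbitrary: p rule: less_induct)
    case less
    show ?case
    proof (cases "p = 0")
      case True then show ?thesis by simp
    next
      case pnz: False
      then have dle: "?d \<le> degree p" using qmin less.prems by blast
      define p' where "p' = p - smult (lead_coeff p) (monom 1 (degree p - ?d) * q)"
      have r': "p' \<in> PF F" "poly p' y = poly p y" "p' = 0 \<or> degree p' < degree p"
        using red_q[OF less.prems(1) dle] unfolding p'_def by blast+
      have "poly (?K p') r = 0"
      proof (cases "p' = 0")
        case True then show ?thesis by simp
      next
        case False then show ?thesis using r' less.hyps less.prems(2) by auto
      qed
      have lF: "lead_coeff p \<in> F" by (rule PF_lead[OF less.prems(1)])
      have mF: "monom 1 (degree p - ?d) \<in> PF F" by (rule PF_monom[OF sf sf1[OF sf]])
      have smF: "smult (lead_coeff p) (monom 1 (degree p - ?d) * q) \<in> PF F"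
        by (rule PF_smult[OF sf lF PF_mult[OF sf mF qF]])
      have "p = p' + smult (lead_coeff p) (monom 1 (degree p - ?d) * q)" unfolding p'_def by simp
      then have "?K p = ?K p' + ?K (smult (lead_coeff p) (monom 1 (degree p - ?d) * q))"
        using Kp_add[OF ph r'(1) smF] by simp
      also have "?K (smult (lead_coeff p) (monom 1 (degree p - ?d) * q)) =
          ?K [:lead_coeff p:] * (?K (monom 1 (degree p - ?d)) * ?K q)"
        by (simp only: smult_cm Kp_mult[OF ph PF_const[OF sf lF] PF_mult[OF sf mF qF]]
             Kp_mult[OF ph mF qF])
      finally have "poly (?K p) r = poly (?K p') r + poly (?K [:lead_coeff p:]) r * (poly (?K (monom 1 (degree p - ?d))) r * poly (?K q) r)"
        by simp
      then show ?thesis using \<open>poly (?K p') r = 0\<close> qr by simp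
    qed
  qed
  define F' where "F' = {poly s y |s. s \<in> PF F}"
  define \<kappa>' where "\<kappa>' z = poly (?K (SOME s. s \<in> PF F \<and> poly s y = z)) r" for z
  have kev: "\<kappa>' (poly s y) = poly (?K s) r" if sF: "s \<in> PF F" for s
  proof -
    let ?s = "SOME s'. s' \<in> PF F \<and> poly s' y = poly s y"
    have s': "?s \<in> PF F \<and> poly ?s y = poly s y" by (rule someI[of _ s]) (use sF in blast)
    then have "poly (?s - s) y = 0" by simp
    then have "poly (?K (?s - s)) r = 0" using wd PF_diff[OF sf _ sF] s' by blast
    moreover have "?K (?s - s) = ?K ?s - ?K s"
      using Kp_add[OF ph PF_diff[OF sf _ sF] sF, of ?s] s' by simp
    ultimately show ?thesis unfolding \<kappa>'_def by simp
  qed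
  have F'I: "s \<in> PF F \<Longrightarrow> poly s y \<in> F'" for s unfolding F'_def by blast
  have F'E: "z \<in> F' \<Longrightarrow> \<exists>s. s \<in> PF F \<and> z = poly s y" for z unfolding F'_def by blast
  have FF': "F \<subseteq> F'"
  proof
    fix c assume "c \<in> F" then show "c \<in> F'" using F'I[OF PF_const[OF sf \<open>c \<in> F\<close>]] by simp
  qed
  have kF: "\<kappa>' c = \<kappa> c" if "c \<in> F" for c
    using kev[OF PF_const[OF sf that]] by (simp add: Kp_const[OF ph])
  have sf': "subfield F'" unfolding subfield_def
  proof (intro conjI ballI)
    show "0 \<in> F'" using FF' sf0[OF sf] by blast
    show "1 \<in> F'" using FF' sf1[OF sf] by blast
    fix a b assume "a \<in> F'" "b \<in> F'"
    then obtain s t where "s \<in> PF F" "t \<in> PF F" "a = poly s y" "b = poly t y" using F'E by metis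
    then show "a + b \<in> F'" "a * b \<in> F'"
      using F'I[OF PF_add[OF sf]] F'I[OF PF_mult[OF sf]] by auto
  next
    fix a assume "a \<in> F'"
    then obtain s where s: "s \<in> PF F" "a = poly s y" using F'E by metis
    then show "- a \<in> F'" using F'I[OF PF_neg[OF sf s(1)]] by simp
    show "inverse a \<in> F'"
    proof (cases "a = 0")
      case True then show ?thesis using FF' sf0[OF sf] by auto
    next
      case False
      then obtain b where "b \<in> PF F" "poly b y * poly s y = 1" using bezout s by blast
      then have "inverse a = poly b y" using s by (metis inverse_unique mult.commute)
      then show ?thesis using F'I[OF \<open>b \<in> PF F\<close>] by simp
    qed
  qed
  have "ph F' \<kappa>'" unfolding ph_def
  proof (intro conjI ballI allI)
    show "subfield F'" by (rule sf')
    show "range \<phi> \<subseteq> F'" using FF' ph_range[OF ph] by blast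
    fix a b assume "a \<in> F'" "b \<in> F'"
    then obtain s t where st: "s \<in> PF F" "t \<in> PF F" "a = poly s y" "b = poly t y" using F'E by metis
    show "\<kappa>' (a + b) = \<kappa>' a + \<kappa>' b"
      using st kev[OF PF_add[OF sf st(1,2)]] kev[OF st(1)] kev[OF st(2)] Kp_add[OF ph st(1,2)] by simp
    show "\<kappa>' (a * b) = \<kappa>' a * \<kappa>' b"
      using st kev[OF PF_mult[OF sf st(1,2)]] kev[OF st(1)] kev[OF st(2)] Kp_mult[OF ph st(1,2)] by simp
  next
    show "\<kappa>' 1 = e" using kF[OF sf1[OF sf]] ph_one[OF ph] by simp
    fix a assume "a \<in> F'"
    then obtain s where s: "s \<in> PF F" "a = poly s y" using F'E by metis
    show "e * \<kappa>' a = \<kappa>' a" using s kev[OF s(1)] poly_e[OF Ke[OF s(1)]] by simp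
  next
    fix a show "\<kappa>' (\<phi> a) = e * \<iota> a" using kF[OF ph_range[OF ph]] ph_phi[OF ph] by simp
  qed
  moreover have "y \<in> F'" using F'I[OF PF_X[OF sf]] by simp
  ultimately show ?thesis using FF' kF by blast
qed


lemma base: "\<exists>\<kappa>. ph (range \<phi>) \<kappa>"
proof -
  define \<kappa>0 where "\<kappa>0 z = e * \<iota> (SOME a. \<phi> a = z)" for z
  have k0: "\<kappa>0 (\<phi> a) = e * \<iota> a" for a
  proof -
    define a' where "a' = (SOME a'. \<phi> a' = \<phi> a)"
    have "\<phi> a' = \<phi> a" unfolding a'_def by (rule someI[of _ a]) simp
    then have "\<phi> (a' - a) = 0" by (simp add: rh_diff[OF phi])
    then have "a' - a \<in> M" using ker by blast
    then have "e * \<iota> (a' - a) = 0" using iker by blast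
    then have "e * \<iota> a' = e * \<iota> a" by (simp add: rh_diff[OF ih] algebra_simps)
    then show ?thesis unfolding \<kappa>0_def a'_def by simp
  qed
  have sf: "subfield (range \<phi>)" unfolding subfield_def
  proof (intro conjI ballI)
    show "0 \<in> range \<phi>" using rh0[OF phi] by (metis rangeI)
    show "1 \<in> range \<phi>" using rh_one[OF phi] by (metis rangeI)
    fix x z assume "x \<in> range \<phi>" "z \<in> range \<phi>"
    then obtain a b where "x = \<phi> a" "z = \<phi> b" by blast
    then show "x + z \<in> range \<phi>" "x * z \<in> range \<phi>"
      by (simp_all add: rh_add[OF phi, symmetric] rh_mult[OF phi, symmetric])
  next
    fix x assume "x \<in> range \<phi>"
    then obtain a where a: "x = \<phi> a" by blast
    then show "- x \<in> range \<phi>" by (simp add: rh_neg[OF phi, symmetric])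
    show "inverse x \<in> range \<phi>"
    proof (cases "x = 0")
      case True then show ?thesis using rh0[OF phi] by (metis inverse_zero rangeI)
    next
      case False
      then have "a \<notin> M" using a ker by blast
      then obtain r where "1 - r * a \<in> M" using maximal_inv[OF Mmax] by blast
      then have "\<phi> (1 - r * a) = 0" using ker by blast
      then have "\<phi> r * x = 1" using a by (simp add: rh_diff[OF phi] rh_one[OF phi] rh_mult[OF phi])
      then have "inverse x = \<phi> r" by (metis inverse_unique mult.commute)
      then show ?thesis by simp
    qed
  qed
  have "ph (range \<phi>) \<kappa>0" unfolding ph_def
  proof (intro conjI ballI allI)
    show "subfield (range \<phi>)" by (rule sf)
    show "range \<phi> \<subseteq> range \<phi>" by simp
    fix x z assume "x \<in> range \<phi>" "z \<in> range \<phi>"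
    then obtain a b where ab: "x = \<phi> a" "z = \<phi> b" by blast
    show "\<kappa>0 (x + z) = \<kappa>0 x + \<kappa>0 z"
      using ab k0 by (simp add: rh_add[OF phi, symmetric] rh_add[OF ih] distrib_left)
    show "\<kappa>0 (x * z) = \<kappa>0 x * \<kappa>0 z"
    proof -
      have "\<kappa>0 (x * z) = e * \<iota> (a * b)" using ab k0 by (simp add: rh_mult[OF phi, symmetric])
      also have "\<dots> = (e * \<iota> a) * (e * \<iota> b)"
        by (simp add: rh_mult[OF ih] ac_simps) (metis ee mult.assoc)
      finally show ?thesis using ab k0 by simp
    qed
  next
    show "\<kappa>0 1 = e" using k0[of 1] by (simp add: rh_one[OF phi] rh_one[OF ih])
    fix x assume "x \<in> range \<phi>"
    then obtain a where "x = \<phi> a" by blast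
    then show "e * \<kappa>0 x = \<kappa>0 x" using k0 by (simp add: mult.assoc[symmetric] ee)
  next
    fix a show "\<kappa>0 (\<phi> a) = e * \<iota> a" by (rule k0)
  qed
  then show ?thesis by blast
qed

definition graph :: "'l set \<Rightarrow> ('l \<Rightarrow> 'b) \<Rightarrow> ('l \<times> 'b) set" where
  "graph F \<kappa> = {(x, \<kappa> x) |x. x \<in> F}"

lemma in_graph: "(x, b) \<in> graph F \<kappa> \<longleftrightarrow> x \<in> F \<and> b = \<kappa> x"
  unfolding graph_def by blast


lemma chain_union:
  assumes C: "C \<in> chains {graph F \<kappa> |F \<kappa>. ph F \<kappa>}" and Cne: "C \<noteq> {}"
  shows "\<exists>F \<kappa>. ph F \<kappa> \<and> \<Union>C = graph F \<kappa>"
proof -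
  let ?S = "{graph F \<kappa> |F \<kappa>. ph F \<kappa>}"
  have CS: "C \<subseteq> ?S" using C by (rule chainsD2)
  let ?U = "\<Union>C"
  have two: "\<exists>X\<in>C. p1 \<in> X \<and> p2 \<in> X" if "p1 \<in> ?U" "p2 \<in> ?U" for p1 p2
  proof -
    from that obtain X1 X2 where X: "X1 \<in> C" "X2 \<in> C" "p1 \<in> X1" "p2 \<in> X2" by blast
    from chainsD[OF C X(1,2)] show ?thesis using X by blast
  qed
  have fnc: "b = b'" if A: "(x, b) \<in> ?U" "(x, b') \<in> ?U" for x b b'
  proof -
    obtain X where X: "X \<in> C" "(x, b) \<in> X" "(x, b') \<in> X" using two[OF A] by blast
    then obtain F \<kappa> where "X = graph F \<kappa>" using CS by blast
    then show ?thesis using X by (simp add: in_graph)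
  qed
  define F where "F = fst ` ?U"
  define \<kappa> where "\<kappa> x = (SOME b. (x, b) \<in> ?U)" for x
  have inU: "(x, \<kappa> x) \<in> ?U" if A: "x \<in> F" for x
  proof -
    obtain b where "(x, b) \<in> ?U" using A unfolding F_def by force
    then show ?thesis unfolding \<kappa>_def by (rule someI)
  qed
  have L: "x \<in> F \<and> \<kappa> x = b" if "(x, b) \<in> ?U" for x b
  proof
    show xF: "x \<in> F" unfolding F_def using that by force
    show "\<kappa> x = b" using fnc[OF inU[OF xF] that] .
  qed
  have mem: "\<exists>F' \<kappa>'. ph F' \<kappa>' \<and> X = graph F' \<kappa>'" if "X \<in> C" for X using that CS by blast
  have sub: "X \<subseteq> ?U" if "X \<in> C" for X using that by blast
  obtain X0 where X0: "X0 \<in> C" using Cne by blast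
  obtain F0 \<kappa>0 where F0: "ph F0 \<kappa>0" "X0 = graph F0 \<kappa>0" using mem[OF X0] by blast
  have lift: "x \<in> F \<and> \<kappa> x = \<kappa>' x" if "X \<in> C" "X = graph F' \<kappa>'" "x \<in> F'" for X F' \<kappa>' x
  proof -
    have "(x, \<kappa>' x) \<in> X" using that(2,3) by (simp add: in_graph)
    then have "(x, \<kappa>' x) \<in> ?U" using that(1) by blast
    then show ?thesis using L by blast
  qed
  have pair: "\<exists>F' \<kappa>' X. X \<in> C \<and> ph F' \<kappa>' \<and> X = graph F' \<kappa>' \<and> x \<in> F' \<and> z \<in> F' \<and> \<kappa>' x = \<kappa> x \<and> \<kappa>' z = \<kappa> z"
    if A: "x \<in> F" "z \<in> F" for x z
  proof -
    obtain X where X: "X \<in> C" "(x, \<kappa> x) \<in> X" "(z, \<kappa> z) \<in> X" using two[OF inU[OF A(1)] inU[OF A(2)]] by blast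
    obtain F' \<kappa>' where "ph F' \<kappa>'" "X = graph F' \<kappa>'" using mem[OF X(1)] by blast
    then show ?thesis using X by (auto simp: in_graph)
  qed
  have phF: "ph F \<kappa>" unfolding ph_def
  proof (intro conjI ballI allI)
    show "subfield F" unfolding subfield_def
    proof (intro conjI ballI)
      show "0 \<in> F" using lift[OF X0 F0(2) sf0[OF ph_sf[OF F0(1)]]] by blast
      show "1 \<in> F" using lift[OF X0 F0(2) sf1[OF ph_sf[OF F0(1)]]] by blast
      fix x z assume "x \<in> F" "z \<in> F"
      then obtain F' \<kappa>' X where P: "X \<in> C" "ph F' \<kappa>'" "X = graph F' \<kappa>'" "x \<in> F'" "z \<in> F'" using pair by metis
      show "x + z \<in> F" using lift[OF P(1,3) sfadd[OF ph_sf[OF P(2)] P(4,5)]] by blast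
      show "x * z \<in> F" using lift[OF P(1,3) sfmult[OF ph_sf[OF P(2)] P(4,5)]] by blast
    next
      fix x assume "x \<in> F"
      then obtain F' \<kappa>' X where P: "X \<in> C" "ph F' \<kappa>'" "X = graph F' \<kappa>'" "x \<in> F'" using pair by metis
      show "- x \<in> F" using lift[OF P(1,3) sfneg[OF ph_sf[OF P(2)] P(4)]] by blast
      show "inverse x \<in> F" using lift[OF P(1,3) sfinv[OF ph_sf[OF P(2)] P(4)]] by blast
    qed
    show "range \<phi> \<subseteq> F" using lift[OF X0 F0(2) ph_range[OF F0(1)]] by blast
    fix x z assume "x \<in> F" "z \<in> F"
    then obtain F' \<kappa>' X where P: "X \<in> C" "ph F' \<kappa>'" "X = graph F' \<kappa>'" "x \<in> F'" "z \<in> F'" "\<kappa>' x = \<kappa> x" "\<kappa>' z = \<kappa> z"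
      using pair by metis
    show "\<kappa> (x + z) = \<kappa> x + \<kappa> z"
      using lift[OF P(1,3) sfadd[OF ph_sf[OF P(2)] P(4,5)]] ph_add[OF P(2) P(4,5)] P(6,7) by simp
    show "\<kappa> (x * z) = \<kappa> x * \<kappa> z"
      using lift[OF P(1,3) sfmult[OF ph_sf[OF P(2)] P(4,5)]] ph_mult[OF P(2) P(4,5)] P(6,7) by simp
  next
    show "\<kappa> 1 = e" using lift[OF X0 F0(2) sf1[OF ph_sf[OF F0(1)]]] ph_one[OF F0(1)] by simp
    fix x assume "x \<in> F"
    then obtain F' \<kappa>' X where P: "X \<in> C" "ph F' \<kappa>'" "X = graph F' \<kappa>'" "x \<in> F'" "\<kappa>' x = \<kappa> x"
      using pair by metis
    show "e * \<kappa> x = \<kappa> x" using ph_e[OF P(2) P(4)] P(5) by simp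
  next
    fix a show "\<kappa> (\<phi> a) = e * \<iota> a"
      using lift[OF X0 F0(2) ph_range[OF F0(1)]] ph_phi[OF F0(1)] by simp
  qed
  have "?U = graph F \<kappa>"
  proof
    show "?U \<subseteq> graph F \<kappa>"
    proof
      fix p assume "p \<in> ?U"
      then obtain x b where "p = (x, b)" "(x, b) \<in> ?U" by (metis prod.collapse)
      then show "p \<in> graph F \<kappa>" using L[of x b] by (simp add: in_graph)
    qed
    show "graph F \<kappa> \<subseteq> ?U" using inU by (auto simp: graph_def)
  qed
  with phF show ?thesis by blast
qed

lemma total: "\<exists>\<kappa>. ph UNIV \<kappa>"
proof -
  let ?S = "{graph F \<kappa> |F \<kappa>. ph F \<kappa>}"
  have "\<exists>G\<in>?S. \<forall>X\<in>?S. G \<subseteq> X \<longrightarrow> X = G"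
  proof (rule Zorn_Lemma2, intro ballI)
    fix C assume C: "C \<in> chains ?S"
    show "\<exists>U\<in>?S. \<forall>X\<in>C. X \<subseteq> U"
    proof (cases "C = {}")
      case True
      obtain \<kappa>0 where "ph (range \<phi>) \<kappa>0" using base by blast
      then show ?thesis using True by blast
    next
      case False
      obtain F \<kappa> where "ph F \<kappa>" "\<Union>C = graph F \<kappa>" using chain_union[OF C False] by blast
      then show ?thesis by blast
    qed
  qed
  then obtain F \<kappa> where phF: "ph F \<kappa>" and mx: "\<forall>X\<in>?S. graph F \<kappa> \<subseteq> X \<longrightarrow> X = graph F \<kappa>" by blast
  have "F = UNIV"
  proof (rule ccontr)
    assume "F \<noteq> UNIV"
    then obtain y where "y \<notin> F" by blast
    then obtain F' \<kappa>' where E: "ph F' \<kappa>'" "F \<subseteq> F'" "y \<in> F'" "\<forall>x\<in>F. \<kappa>' x = \<kappa> x"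
      using ext[OF phF] by blast
    have "graph F \<kappa> \<subseteq> graph F' \<kappa>'" using E(2,4) by (auto simp: graph_def)
    moreover have "graph F' \<kappa>' \<in> ?S" using E(1) by blast
    ultimately have "graph F' \<kappa>' = graph F \<kappa>" using mx by blast
    moreover have "(y, \<kappa>' y) \<in> graph F' \<kappa>'" using E(3) by (simp add: in_graph)
    ultimately have "y \<in> F" by (simp add: in_graph)
    with \<open>y \<notin> F\<close> show False by simp
  qed
  with phF show ?thesis by blast
qed

end


theorem proposition4p15:
  fixes actA :: "'s::{group_add,finite} \<Rightarrow> 'a::comm_ring_1 \<Rightarrow> 'a"
    and actB :: "'s \<Rightarrow> 'b::comm_ring_1 \<Rightarrow> 'b"
    and M :: "'a set"
    and \<phi> :: "'a \<Rightarrow> 'l::field"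
    and \<iota> :: "'a \<Rightarrow> 'b"
  assumes "pseudofield actA"
    and "maximal_ideal M"
    and "algebraic_closure_of_quotient \<phi> M"
    and "difference_closed actB"
    and "difference_hom actA actB \<iota>" and "inj \<iota>"
  shows "\<exists>e :: ('s \<Rightarrow> 'l) \<Rightarrow> 'b. difference_hom fun_act actB e \<and> inj e \<and>
           (\<forall>a. e (taylor actA \<phi> a) = \<iota> a)"
proof -
  note pfA = assms(1) and Mm = assms(2) and acq = assms(3) and dc = assms(4) and dh = assms(5)
  have drA: "difference_ring actA" by (rule pf_dr[OF pfA])
  have drB: "difference_ring actB" by (rule pf_dr[OF dc_pf[OF dc]])
  have hB: "ring_hom (actB \<sigma>)" for \<sigma> by (rule dr_hom[OF drB])
  have phi: "ring_hom \<phi>" and ker: "{a. \<phi> a = 0} = M"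
    and alg: "\<And>y. \<exists>p. p \<noteq> 0 \<and> (\<forall>i. coeff p i \<in> range \<phi>) \<and> poly p y = 0"
    using acq unfolding algebraic_closure_of_quotient_def by blast+
  obtain e where ee: "e * e = e" and enz: "e \<noteq> 0"
    and orth: "\<And>\<sigma> \<tau>. \<sigma> \<noteq> \<tau> \<Longrightarrow> actB \<sigma> e * actB \<tau> e = 0"
    and sume: "(\<Sum>\<sigma>\<in>UNIV. actB \<sigma> e) = 1"
    and iker: "\<And>a. e * \<iota> a = 0 \<longleftrightarrow> a \<in> M"
    using exists_e0[OF pfA Mm dc dh] by blast
  have root: "\<exists>x. e * poly Q x = 0" if "lead_coeff Q = 1" "degree Q > 0" for Q :: "'b poly"
  proof (rule Submission.root[OF dc ee enz _ that])
    fix \<rho> :: 's assume "\<rho> \<noteq> 0"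
    then show "e * actB \<rho> e = 0" using orth[of 0 \<rho>] by (simp add: dr_0[OF drB])
  qed
  interpret zc \<phi> \<iota> e M
    by unfold_locales (use phi ker alg Mm ee iker dh_hom[OF dh] root in auto)
  obtain \<kappa> where ph: "ph UNIV \<kappa>" using total by blast
  have kadd: "\<kappa> (x + z) = \<kappa> x + \<kappa> z" for x z using ph_add[OF ph] by simp
  have kmult: "\<kappa> (x * z) = \<kappa> x * \<kappa> z" for x z using ph_mult[OF ph] by simp
  have ke: "e * \<kappa> x = \<kappa> x" for x using ph_e[OF ph] by simp
  have kone: "\<kappa> 1 = e" by (rule ph_one[OF ph])
  have kphi: "\<kappa> (\<phi> a) = e * \<iota> a" for a by (rule ph_phi[OF ph])
  have kinj: "\<kappa> x = 0 \<Longrightarrow> x = 0" for x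
  proof (rule ccontr)
    assume "\<kappa> x = 0" "x \<noteq> 0"
    then have "\<kappa> (x * inverse x) = 0" by (simp only: kmult mult_zero_left)
    moreover have "x * inverse x = 1" using \<open>x \<noteq> 0\<close> by simp
    ultimately show False using kone enz by simp
  qed
  define E where "E f = (\<Sum>\<sigma>\<in>UNIV. actB \<sigma> (\<kappa> (f \<sigma>)))" for f :: "'s \<Rightarrow> 'l"
  have comp: "actB \<sigma> (\<kappa> x) = actB \<sigma> e * actB \<sigma> (\<kappa> x)" for \<sigma> x
    by (metis ke rh_mult[OF hB])
  have cross: "actB \<sigma> (\<kappa> x) * actB \<tau> (\<kappa> z) = 0" if "\<sigma> \<noteq> \<tau>" for \<sigma> \<tau> x z
  proof -
    have "actB \<sigma> (\<kappa> x) * actB \<tau> (\<kappa> z) = (actB \<sigma> e * actB \<tau> e) * (actB \<sigma> (\<kappa> x) * actB \<tau> (\<kappa> z))"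
      by (subst comp[of \<sigma>], subst comp[of \<tau>]) (simp add: ac_simps)
    then show ?thesis using orth[OF that] by simp
  qed
  have Eadd: "E (f + g) = E f + E g" for f g
    by (simp add: E_def kadd rh_add[OF hB] sum.distrib)
  have Emult: "E (f * g) = E f * E g" for f g
  proof -
    have "E f * E g = (\<Sum>\<sigma>\<in>UNIV. \<Sum>\<tau>\<in>UNIV. actB \<sigma> (\<kappa> (f \<sigma>)) * actB \<tau> (\<kappa> (g \<tau>)))"
      by (simp add: E_def sum_product)
    also have "\<dots> = (\<Sum>\<sigma>\<in>UNIV. actB \<sigma> (\<kappa> (f \<sigma>)) * actB \<sigma> (\<kappa> (g \<sigma>)))"
    proof (rule sum.cong[OF refl])
      fix \<sigma> :: 's
      have "(\<Sum>\<tau>\<in>UNIV. actB \<sigma> (\<kappa> (f \<sigma>)) * actB \<tau> (\<kappa> (g \<tau>))) =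
         actB \<sigma> (\<kappa> (f \<sigma>)) * actB \<sigma> (\<kappa> (g \<sigma>)) + (\<Sum>\<tau>\<in>UNIV-{\<sigma>}. actB \<sigma> (\<kappa> (f \<sigma>)) * actB \<tau> (\<kappa> (g \<tau>)))"
        by (subst sum.remove[of _ \<sigma>]) auto
      also have "(\<Sum>\<tau>\<in>UNIV-{\<sigma>}. actB \<sigma> (\<kappa> (f \<sigma>)) * actB \<tau> (\<kappa> (g \<tau>))) = 0"
        by (rule sum.neutral) (use cross in auto)
      finally show "(\<Sum>\<tau>\<in>UNIV. actB \<sigma> (\<kappa> (f \<sigma>)) * actB \<tau> (\<kappa> (g \<tau>))) =
         actB \<sigma> (\<kappa> (f \<sigma>)) * actB \<sigma> (\<kappa> (g \<sigma>))" by simp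
    qed
    also have "\<dots> = E (f * g)" by (simp add: E_def kmult rh_mult[OF hB])
    finally show ?thesis by simp
  qed
  have Eone: "E 1 = 1" by (simp add: E_def kone sume)
  have Eh: "ring_hom E" unfolding ring_hom_def using Eone Eadd Emult by blast
  have Eact: "E (fun_act \<tau> f) = actB \<tau> (E f)" for \<tau> f
  proof -
    have "E (fun_act \<tau> f) = (\<Sum>\<sigma>\<in>UNIV. actB \<sigma> (\<kappa> (f (-\<tau> + \<sigma>))))" by (simp add: E_def fun_act_def)
    also have "\<dots> = (\<Sum>\<rho>\<in>UNIV. actB (\<tau> + \<rho>) (\<kappa> (f \<rho>)))"
      by (rule sum.reindex_bij_witness[where i="\<lambda>\<rho>. \<tau> + \<rho>" and j="\<lambda>\<sigma>. -\<tau> + \<sigma>"])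
         (simp_all add: add.assoc[symmetric])
    also have "\<dots> = actB \<tau> (E f)" by (simp add: E_def rh_sum[OF hB] dr_comp[OF drB])
    finally show ?thesis .
  qed
  have "difference_hom fun_act actB E" unfolding difference_hom_def using Eh Eact by blast
  moreover have "inj E"
  proof (rule injI)
    fix f g assume fg: "E f = E g"
    have E0: "E (f - g) = 0" using fg by (simp add: rh_diff[OF Eh])
    show "f = g"
    proof
      fix \<sigma>0
      let ?h = "f - g"
      have "actB \<sigma>0 e * E ?h = (\<Sum>\<sigma>\<in>UNIV. actB \<sigma>0 e * actB \<sigma> (\<kappa> (?h \<sigma>)))"
        by (simp add: E_def sum_distrib_left)
      also have "\<dots> = actB \<sigma>0 (\<kappa> (?h \<sigma>0))"
      proof -
        have "(\<Sum>\<sigma>\<in>UNIV. actB \<sigma>0 e * actB \<sigma> (\<kappa> (?h \<sigma>))) = actB \<sigma>0 e * actB \<sigma>0 (\<kappa> (?h \<sigma>0))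
            + (\<Sum>\<sigma>\<in>UNIV-{\<sigma>0}. actB \<sigma>0 e * actB \<sigma> (\<kappa> (?h \<sigma>)))"
          by (subst sum.remove[of _ \<sigma>0]) auto
        also have "(\<Sum>\<sigma>\<in>UNIV-{\<sigma>0}. actB \<sigma>0 e * actB \<sigma> (\<kappa> (?h \<sigma>))) = 0"
        proof (rule sum.neutral, rule ballI)
          fix \<sigma> assume "\<sigma> \<in> UNIV - {\<sigma>0}"
          then have "actB \<sigma>0 (\<kappa> 1) * actB \<sigma> (\<kappa> (?h \<sigma>)) = 0" using cross by auto
          then show "actB \<sigma>0 e * actB \<sigma> (\<kappa> (?h \<sigma>)) = 0" by (simp add: kone)
        qed
        finally show ?thesis using comp[of \<sigma>0] by simp
      qed
      finally have "actB \<sigma>0 (\<kappa> (?h \<sigma>0)) = actB \<sigma>0 0" using E0 by (simp add: rh0[OF hB])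
      then have "\<kappa> (?h \<sigma>0) = 0" by (rule dr_inj[OF drB])
      then have "?h \<sigma>0 = 0" by (rule kinj)
      then show "f \<sigma>0 = g \<sigma>0" by simp
    qed
  qed
  moreover have "E (taylor actA \<phi> a) = \<iota> a" for a
  proof -
    have "E (taylor actA \<phi> a) = (\<Sum>\<sigma>\<in>UNIV. actB \<sigma> (e * \<iota> (actA (-\<sigma>) a)))"
      by (simp add: E_def taylor_def kphi)
    also have "\<dots> = (\<Sum>\<sigma>\<in>UNIV. actB \<sigma> e * \<iota> a)"
      by (simp add: rh_mult[OF hB] dh_comm[OF dh, symmetric] dr_inv2[OF drA])
    also have "\<dots> = \<iota> a" by (simp add: sum_distrib_right[symmetric] sume)
    finally show ?thesis .
  qed
  ultimately show ?thesis by blast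
qed


end
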